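(* Let $a,b\in\mathbb{R}$ with $a,b,a+b\notin\mathbb{Z}$, $a-b\in\mathbb{Z}$, and let $\check T=T(a,b)$. Its index sets are $\check I_1=\check I_2=\mathbb{N}_0$, $\check I_3=\check I_{3-}\sqcup\check I_{3+}$, $\check I_4=\check I_{4-}\sqcup\check I_{4+}$, where $\check I_{3-}=\{n\in\mathbb{N}_0:2n-a+b<0\}$, $\check I_{3+}=\{n\in\mathbb{N}_0:n-a+b\ge0\}$, $\check I_{4-}=\{n\in\mathbb{N}_0:2n+a-b<0\}$, $\check I_{4+}=\{n\in\mathbb{N}_0:n+a-b\ge0\}$. The type 1 and type 2 eigenvalues are all simple; the eigenvalues in $\check\sigma_{3-}$ and $\check\sigma_{4-}$ are simple; the remaining type 3 and 4 eigenvalues are degenerate with $\check\sigma_{34}:=\check\sigma_{3+}=\check\sigma_{4+}$, and for $\lambda\in\check\sigma_{34}$ the set $\mathrm{Ric}_\lambda(\check T)$ has exactly two elements, of types 3 and 4. If $a\ge b$ then $\sigma_{\mathrm{qr}}(\check T)=\check\sigma_1\sqcup\check\sigma_2\sqcup\check\sigma_{3-}\sqcup\check\sigma_{34}$ with labels (single type 1), (single type 2), (single type 3), (two, types 3 and 4) respectively; if $b\ge a$ then $\sigma_{\mathrm{qr}}(\check T)=\check\sigma_1\sqcup\check\sigma_2\sqcup\check\sigma_{4-}\sqcup\check\sigma_{34}$ with labels (single type 1), (single type 2), (single type 4), (two, types 3 and 4).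
   Context: $D=d/dx$; $T(a,b)=(x^2-1)\big(D^2+(\frac{a+1}{x-1}+\frac{b+1}{x+1})D\big)$. For $T=pD^2+qD+r$, $\mathrm{Ric}_\lambda(T)$ is the set of rational $w$ with $p(w'+w^2)+qw+r=\lambda$ (log-derivatives of quasi-rational eigenfunctions $\phi$ with $T\phi=\lambda\phi$), $\sigma_{\mathrm{qr}}(T)=\{\lambda:\mathrm{Ric}_\lambda(T)\neq\emptyset\}$; $\lambda$ is simple if $\mathrm{Ric}_\lambda(T)$ is a singleton. Asymptotic type of $w=\phi'/\phi$: 1 if regular at $x=\pm1$, 2 if poles at both, 3 if pole at $x=1$ only, 4 if pole at $x=-1$ only. Degree $\deg\phi=\lim_{x\to\infty}xw(x)$; index of a type $\imath$ eigenfunction is $\deg\phi-d_\imath$, $d_1=0,d_2=-a-b,d_3=-a,d_4=-b$; $\check I_\imath$ is the set of indices of type $\imath$ eigenfunctions. $\check\sigma_\imath=\lambda_\imath(\check I_\imath;a,b)$, $\check\sigma_{\imath\pm}=\lambda_\imath(\check I_{\imath\pm};a,b)$, with $\lambda_1(k;a,b)=k(k+a+b+1)$, $\lambda_2(k;a,b)=(k-a-b)(k+1)$, $\lambda_3(k;a,b)=(k-a)(k+b+1)$, $\lambda_4(k;a,b)=(k-b)(k+a+1)$. *)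

theory Defs
  imports Complex_Main "HOL-Computational_Algebra.Polynomial" "HOL-Computational_Algebra.Fraction_Field"
begin

text \<open>The operator T(a,b) = p D^2 + q D + r with p = x^2 - 1,
  q = (x^2-1)((a+1)/(x-1) + (b+1)/(x+1)) = (a+b+2) x + (a-b), r = 0.\<close>

definition T_p :: "real poly" where "T_p = [:-1, 0, 1:]"
definition T_q :: "real \<Rightarrow> real \<Rightarrow> real poly" where "T_q a b = [:a - b, a + b + 2:]"
definition T_r :: "real poly" where "T_r = 0"

text \<open>w = P/Q satisfies p(w' + w^2) + q w + r = lambda, written after multiplying by Q^2
  (independent of the chosen representation).\<close>
definition Ric :: "real \<Rightarrow> real \<Rightarrow> real \<Rightarrow> real poly fract set" where
  "Ric a b lam = {w. \<exists>P Q. Q \<noteq> 0 \<and> w = Fract P Q \<and>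
      T_p * (pderiv P * Q - P * pderiv Q + P ^ 2) + T_q a b * P * Q + T_r * Q ^ 2
        = smult lam (Q ^ 2)}"

definition sigma_qr :: "real \<Rightarrow> real \<Rightarrow> real set" where
  "sigma_qr a b = {lam. Ric a b lam \<noteq> {}}"

definition regular_at :: "real poly fract \<Rightarrow> real \<Rightarrow> bool" where
  "regular_at w x0 \<longleftrightarrow> (\<exists>P Q. Q \<noteq> 0 \<and> w = Fract P Q \<and> poly Q x0 \<noteq> 0)"

definition asym_type :: "real poly fract \<Rightarrow> nat" where
  "asym_type w =
     (if regular_at w 1 \<and> regular_at w (-1) then 1
      else if \<not> regular_at w 1 \<and> \<not> regular_at w (-1) then 2
      else if \<not> regular_at w 1 then 3 else 4)"

text \<open>deg phi = lim_{x \<rightarrow> \<infinity>} x w(x).\<close>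
definition has_degree :: "real poly fract \<Rightarrow> real \<Rightarrow> bool" where
  "has_degree w d \<longleftrightarrow> (\<exists>P Q. Q \<noteq> 0 \<and> w = Fract P Q \<and>
      ((\<lambda>x. x * poly P x / poly Q x) \<longlongrightarrow> d) at_top)"

definition d_type :: "nat \<Rightarrow> real \<Rightarrow> real \<Rightarrow> real" where
  "d_type i a b = (if i = 1 then 0 else if i = 2 then -a-b else if i = 3 then -a else -b)"

definition index_set :: "nat \<Rightarrow> real \<Rightarrow> real \<Rightarrow> real set" where
  "index_set i a b = {k. \<exists>lam w. w \<in> Ric a b lam \<and> asym_type w = i \<and>
       has_degree w (k + d_type i a b)}"

definition lam_type :: "nat \<Rightarrow> real \<Rightarrow> real \<Rightarrow> real \<Rightarrow> real" where
  "lam_type i k a b = (if i = 1 then k * (k + a + b + 1)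
     else if i = 2 then (k - a - b) * (k + 1)
     else if i = 3 then (k - a) * (k + b + 1)
     else (k - b) * (k + a + 1))"

definition N0 :: "real set" where "N0 = {k. \<exists>n::nat. k = real n}"

definition I3m :: "real \<Rightarrow> real \<Rightarrow> real set" where
  "I3m a b = {k \<in> N0. 2 * k - a + b < 0}"
definition I3p :: "real \<Rightarrow> real \<Rightarrow> real set" where
  "I3p a b = {k \<in> N0. k - a + b \<ge> 0}"
definition I4m :: "real \<Rightarrow> real \<Rightarrow> real set" where
  "I4m a b = {k \<in> N0. 2 * k + a - b < 0}"
definition I4p :: "real \<Rightarrow> real \<Rightarrow> real set" where
  "I4p a b = {k \<in> N0. k + a - b \<ge> 0}"

definition sigma_of :: "nat \<Rightarrow> real set \<Rightarrow> real \<Rightarrow> real \<Rightarrow> real set" where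
  "sigma_of i I a b = (\<lambda>k. lam_type i k a b) ` I"

definition sigma_type :: "nat \<Rightarrow> real \<Rightarrow> real \<Rightarrow> real set" where
  "sigma_type i a b = sigma_of i (index_set i a b) a b"

end

theory Submission
  imports Defs "HOL-Computational_Algebra.Polynomial_Factorial" "HOL-Computational_Algebra.Field_as_Ring"
begin

definition Ricq :: "real \<Rightarrow> real \<Rightarrow> real \<Rightarrow> real poly \<Rightarrow> real poly \<Rightarrow> bool" where
  "Ricq a b lam P Q \<longleftrightarrow> T_p * (pderiv P * Q - P * pderiv Q + P ^ 2) + T_q a b * P * Q + T_r * Q ^ 2
        = smult lam (Q ^ 2)"

definition Ediff :: "real \<Rightarrow> real \<Rightarrow> real \<Rightarrow> real poly \<Rightarrow> real poly \<Rightarrow> real poly" where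
  "Ediff a b lam P Q = T_p * (pderiv P * Q - P * pderiv Q + P ^ 2) + T_q a b * P * Q + T_r * Q ^ 2
        - smult lam (Q ^ 2)"

lemma Ricq_Ediff: "Ricq a b lam P Q \<longleftrightarrow> Ediff a b lam P Q = 0"
  unfolding Ricq_def Ediff_def by simp

lemma pext: "(\<And>x. poly p x = poly q x) \<Longrightarrow> p = (q::real poly)"
  using poly_eq_poly_eq_iff[of p q] by blast

lemma Ediff_scale: "Ediff a b lam (P * R) (Q * R) = R^2 * Ediff a b lam P Q"
  by (rule pext) (simp add: Ediff_def pderiv_mult T_p_def T_q_def T_r_def; algebra)

lemma Ricq_scale:
  assumes "R \<noteq> 0"
  shows "Ricq a b lam (P * R) (Q * R) \<longleftrightarrow> Ricq a b lam P Q"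
  using assms by (simp add: Ricq_Ediff Ediff_scale)

lemma Ediff_shift:
  assumes "\<alpha>*(\<alpha>+a) = 0" "\<beta>*(\<beta>+b) = 0"
  shows "Ediff (a+2*\<alpha>) (b+2*\<beta>) (lam - (\<alpha>+\<beta>)*(\<alpha>+\<beta>+a+b+1)) (P*T_p - [:\<alpha>-\<beta>,\<alpha>+\<beta>:]*Q) (Q*T_p)
     = T_p^2 * Ediff a b lam P Q"
proof -
  have "poly (Ediff (a+2*\<alpha>) (b+2*\<beta>) (lam - (\<alpha>+\<beta>)*(\<alpha>+\<beta>+a+b+1)) (P*T_p - [:\<alpha>-\<beta>,\<alpha>+\<beta>:]*Q) (Q*T_p)) x
     = poly (T_p^2 * Ediff a b lam P Q) x" for x
    using assms
    apply (simp add: Ediff_def pderiv_mult pderiv_diff T_p_def T_q_def T_r_def pderiv_pCons pderiv_add pderiv_smult)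
    apply algebra
    done
  then show ?thesis by (rule pext)
qed

abbreviation X1 :: "real poly" where "X1 \<equiv> [:-1,1:]"
abbreviation X2 :: "real poly" where "X2 \<equiv> [:1,1:]"

lemma Tp_eq: "T_p = X1 * X2" by (simp add: T_p_def)

lemma Ric_iff:
  assumes "Q \<noteq> 0"
  shows "Fract P Q \<in> Ric a b lam \<longleftrightarrow> Ricq a b lam P Q"
proof
  assume "Fract P Q \<in> Ric a b lam"
  then obtain P1 Q1 where Q1: "Q1 \<noteq> 0" "Fract P Q = Fract P1 Q1" "Ricq a b lam P1 Q1"
    unfolding Ric_def Ricq_def by auto
  then have e: "P * Q1 = P1 * Q" using assms by (simp add: eq_fract)
  have "Ricq a b lam P Q \<longleftrightarrow> Ricq a b lam (P*Q1) (Q*Q1)" using Ricq_scale[OF Q1(1)] by simp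
  also have "\<dots> \<longleftrightarrow> Ricq a b lam (P1*Q) (Q1*Q)" by (metis e mult.commute)
  also have "\<dots> \<longleftrightarrow> Ricq a b lam P1 Q1" using Ricq_scale[OF assms] by simp
  finally show "Ricq a b lam P Q" using Q1 by simp
next
  assume "Ricq a b lam P Q" then show "Fract P Q \<in> Ric a b lam"
    using assms unfolding Ric_def Ricq_def by auto
qed

lemma coprime_rep: "\<exists>P Q. Q \<noteq> 0 \<and> coprime P Q \<and> w = Fract P (Q::real poly)"
proof -
  obtain a b where ab0: "w = Fract a b" "b \<noteq> 0" by (cases w) auto
  then have "gcd a b \<noteq> 0" by simp
  from gcd_coprime_exists[OF this] obtain a' b' where
    ab: "a = a' * gcd a b" "b = b' * gcd a b" "coprime a' b'" by blast
  have "b' \<noteq> 0" using ab(2) ab0(2) by auto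
  moreover have "Fract a b = Fract a' b'" using ab0(2) \<open>b' \<noteq> 0\<close>
    by (simp add: eq_fract) (metis ab(1,2) mult.commute mult.left_commute)
  ultimately show ?thesis using ab(3) ab0(1) by blast
qed

lemma coprime_root:
  assumes "coprime P Q" "poly P c = 0" "poly (Q::real poly) c = 0" shows False
proof -
  have "[:-c,1:] dvd P" "[:-c,1:] dvd Q" using assms poly_eq_0_iff_dvd by blast+
  then have "is_unit [:-c,1:]" using assms(1) coprime_common_divisor by blast
  then show False by (simp add: is_unit_iff_degree)
qed

lemma regular_coprime:
  assumes "regular_at w c" "w = Fract P Q" "Q \<noteq> 0" "coprime P Q" shows "poly Q c \<noteq> 0"
proof
  assume q0: "poly Q c = 0"
  obtain P1 Q1 where PQ1: "Q1 \<noteq> 0" "w = Fract P1 Q1" "poly Q1 c \<noteq> 0"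
    using assms(1) unfolding regular_at_def by auto
  then have "P * Q1 = P1 * Q" using assms by (simp add: eq_fract)
  then have "poly P c * poly Q1 c = poly P1 c * poly Q c" by (metis poly_mult)
  then have "poly P c = 0" using q0 PQ1(3) by simp
  then show False using coprime_root assms q0 by blast
qed

lemma regular_intro: "Q \<noteq> 0 \<Longrightarrow> poly Q c \<noteq> 0 \<Longrightarrow> regular_at (Fract P Q) c"
  unfolding regular_at_def by blast

lemma regular_add: assumes "regular_at w c" "regular_at z c" shows "regular_at (w + z) c"
proof -
  obtain P Q where 1: "Q \<noteq> 0" "w = Fract P Q" "poly Q c \<noteq> 0" using assms(1) unfolding regular_at_def by auto
  obtain P1 Q1 where 2: "Q1 \<noteq> 0" "z = Fract P1 Q1" "poly Q1 c \<noteq> 0" using assms(2) unfolding regular_at_def by auto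
  have "w + z = Fract (P * Q1 + P1 * Q) (Q * Q1)" using 1 2 by simp
  then show ?thesis using 1 2 regular_intro[of "Q*Q1" c] by simp
qed

lemma regular_uminus: assumes "regular_at w c" shows "regular_at (- w) c"
proof -
  obtain P Q where 1: "Q \<noteq> 0" "w = Fract P Q" "poly Q c \<noteq> 0" using assms(1) unfolding regular_at_def by auto
  then show ?thesis using regular_intro[of Q c "-P"] by simp
qed

lemma regular_diff: "regular_at w c \<Longrightarrow> regular_at z c \<Longrightarrow> regular_at (w - z) c"
  using regular_add[of w c "-z"] regular_uminus[of z c] by simp

lemma regular_X2_1: "regular_at (Fract [:\<beta>:] X2) 1"
  by (rule regular_intro) auto
lemma regular_X1_m1: "regular_at (Fract [:\<alpha>:] X1) (-1)"
  by (rule regular_intro) auto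
lemma regular_fderiv:
  assumes "y \<noteq> 0" "poly y c \<noteq> 0" shows "regular_at (Fract (pderiv y) y) c"
  using assms by (rule regular_intro)

lemma not_regular_X1:
  assumes "a \<noteq> 0" shows "\<not> regular_at (Fract [:a:] X1) 1"
proof
  assume "regular_at (Fract [:a:] X1) 1"
  then obtain P Q where 1: "Q \<noteq> 0" "Fract [:a:] X1 = Fract P Q" "poly Q 1 \<noteq> 0" unfolding regular_at_def by auto
  then have "[:a:] * Q = P * X1" by (simp add: eq_fract)
  then have "poly ([:a:] * Q) 1 = poly (P * X1) 1" by simp
  then show False using assms 1(3) by simp
qed

lemma not_regular_X2:
  assumes "b \<noteq> 0" shows "\<not> regular_at (Fract [:b:] X2) (-1)"
proof
  assume "regular_at (Fract [:b:] X2) (-1)"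
  then obtain P Q where 1: "Q \<noteq> 0" "Fract [:b:] X2 = Fract P Q" "poly Q (-1) \<noteq> 0" unfolding regular_at_def by auto
  then have "[:b:] * Q = P * X2" by (simp add: eq_fract)
  then have "poly ([:b:] * Q) (-1) = poly (P * X2) (-1)" by simp
  then show False using assms 1(3) by simp
qed

lemma Ricq_P1:
  assumes "Ricq a b lam P Q"
  shows "T_p * P * (P - pderiv Q) = Q * (smult lam Q - T_q a b * P - T_p * pderiv P)"
proof -
  have "Ediff a b lam P Q = 0" using assms by (simp add: Ricq_Ediff)
  moreover have "Q * (smult lam Q - T_q a b * P - T_p * pderiv P) - T_p * P * (P - pderiv Q) = - Ediff a b lam P Q"
    by (rule pext) (simp add: Ediff_def T_p_def T_q_def T_r_def; algebra)
  ultimately show ?thesis by simp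
qed

lemma no_double_pole1:
  assumes R: "Ricq a b lam P Q" and cp: "coprime P Q"
  shows "\<not> X1^2 dvd Q"
proof
  assume "X1^2 dvd Q" then obtain R where QR: "Q = X1^2 * R" by (elim dvdE)
  have q1: "poly Q 1 = 0" by (simp add: QR)
  have dq1: "poly (pderiv Q) 1 = 0" by (simp only: QR power2_eq_square pderiv_mult) simp
  have "X1 * (X2 * P * (P - pderiv Q)) = X1 * (X1 * R * (smult lam Q - T_q a b * P - T_p * pderiv P))"
  proof -
    have "X1 * (X2 * P * (P - pderiv Q)) = T_p * P * (P - pderiv Q)" unfolding Tp_eq by (simp only: mult_ac)
    also have "\<dots> = Q * (smult lam Q - T_q a b * P - T_p * pderiv P)" by (rule Ricq_P1[OF R])
    also have "\<dots> = X1 * (X1 * R * (smult lam Q - T_q a b * P - T_p * pderiv P))"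
      unfolding QR power2_eq_square by (simp only: mult_ac)
    finally show ?thesis .
  qed
  then have "X2 * P * (P - pderiv Q) = X1 * R * (smult lam Q - T_q a b * P - T_p * pderiv P)"
    using mult_left_cancel[of X1] by (metis pCons_eq_0_iff one_neq_zero)
  then have "poly (X2 * P * (P - pderiv Q)) 1 = poly (X1 * R * (smult lam Q - T_q a b * P - T_p * pderiv P)) 1"
    by simp
  then have "poly P 1 = 0" using dq1 by simp
  then show False using coprime_root cp q1 by blast
qed

lemma no_double_pole2:
  assumes R: "Ricq a b lam P Q" and cp: "coprime P Q"
  shows "\<not> X2^2 dvd Q"
proof
  assume "X2^2 dvd Q" then obtain R where QR: "Q = X2^2 * R" by (elim dvdE)
  have q1: "poly Q (-1) = 0" by (simp add: QR)
  have dq1: "poly (pderiv Q) (-1) = 0" by (simp only: QR power2_eq_square pderiv_mult) simp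
  have "X2 * (X1 * P * (P - pderiv Q)) = X2 * (X2 * R * (smult lam Q - T_q a b * P - T_p * pderiv P))"
  proof -
    have "X2 * (X1 * P * (P - pderiv Q)) = T_p * P * (P - pderiv Q)" unfolding Tp_eq by (simp only: mult_ac)
    also have "\<dots> = Q * (smult lam Q - T_q a b * P - T_p * pderiv P)" by (rule Ricq_P1[OF R])
    also have "\<dots> = X2 * (X2 * R * (smult lam Q - T_q a b * P - T_p * pderiv P))"
      unfolding QR power2_eq_square by (simp only: mult_ac)
    finally show ?thesis .
  qed
  then have "X1 * P * (P - pderiv Q) = X2 * R * (smult lam Q - T_q a b * P - T_p * pderiv P)"
    using mult_left_cancel[of X2] by (metis pCons_eq_0_iff one_neq_zero)
  then have "poly (X1 * P * (P - pderiv Q)) (-1) = poly (X2 * R * (smult lam Q - T_q a b * P - T_p * pderiv P)) (-1)"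
    by simp
  then have "poly P (-1) = 0" using dq1 by simp
  then show False using coprime_root cp q1 by blast
qed

lemma X1_nz: "X1 \<noteq> 0" by simp
lemma X2_nz: "X2 \<noteq> 0" by simp

lemma residue1:
  assumes "Ricq a b lam P (X1 * Q1)"
  shows "poly P 1 * (poly P 1 + a * poly Q1 1) = 0"
proof -
  define F where "F = X2 * (pderiv P * (X1 * Q1) - P * (Q1 + X1 * pderiv Q1) + P^2) + T_q a b * P * Q1
     - smult lam (X1 * Q1^2)"
  have "Ediff a b lam P (X1 * Q1) = X1 * F"
    by (rule pext) (simp add: F_def Ediff_def pderiv_mult T_p_def T_q_def T_r_def pderiv_add pderiv_diff pderiv_smult pderiv_pCons pderiv_minus; algebra)
  then have "X1 * F = 0" using assms by (simp add: Ricq_Ediff)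
  then have "F = 0" using X1_nz X2_nz mult_eq_0_iff by blast
  then have "poly F 1 = 0" by simp
  then show ?thesis by (simp add: F_def T_q_def; algebra)
qed

lemma residue2:
  assumes "Ricq a b lam P (X2 * Q1)"
  shows "poly P (-1) * (poly P (-1) + b * poly Q1 (-1)) = 0"
proof -
  define F where "F = X1 * (pderiv P * (X2 * Q1) - P * (Q1 + X2 * pderiv Q1) + P^2) + T_q a b * P * Q1
     - smult lam (X2 * Q1^2)"
  have "Ediff a b lam P (X2 * Q1) = X2 * F"
    by (rule pext) (simp add: F_def Ediff_def pderiv_mult T_p_def T_q_def T_r_def pderiv_add pderiv_diff pderiv_smult pderiv_pCons pderiv_minus; algebra)
  then have "X2 * F = 0" using assms by (simp add: Ricq_Ediff)
  then have "F = 0" using X1_nz X2_nz mult_eq_0_iff by blast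
  then have "poly F (-1) = 0" by simp
  then show ?thesis by (simp add: F_def T_q_def; algebra)
qed

lemma pole1:
  assumes "w \<in> Ric a b lam" shows "regular_at w 1 \<or> regular_at (w + Fract [:a:] X1) 1"
proof -
  obtain P Q where PQ: "Q \<noteq> 0" "coprime P Q" "w = Fract P Q" using coprime_rep by blast
  have R: "Ricq a b lam P Q" using assms PQ Ric_iff by blast
  show ?thesis
  proof (cases "poly Q 1 = 0")
    case False then show ?thesis using PQ regular_intro by blast
  next
    case True
    then obtain Q1 where Q1: "Q = X1 * Q1" using poly_eq_0_iff_dvd[of Q 1] by (auto elim: dvdE)
    have q1: "poly Q1 1 \<noteq> 0"
    proof
      assume "poly Q1 1 = 0" then obtain Q2 where "Q1 = X1*Q2" using poly_eq_0_iff_dvd[of Q1 1] by (auto elim: dvdE)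
      then have "Q = X1^2 * Q2" using Q1 by (simp only: power2_eq_square mult.assoc)
      then have "X1^2 dvd Q" by (rule dvdI)
      then show False using no_double_pole1 R PQ by blast
    qed
    have "poly P 1 \<noteq> 0" using coprime_root PQ(2) True by blast
    then have e: "poly P 1 + a * poly Q1 1 = 0" using residue1[of a b lam P Q1] R Q1 by simp
    then obtain R0 where R0: "P + smult a Q1 = X1 * R0" using poly_eq_0_iff_dvd[of "P + smult a Q1" 1] by (auto elim: dvdE)
    have "Q1 \<noteq> 0" using PQ Q1 by auto
    have "w + Fract [:a:] X1 = Fract (P * X1 + [:a:] * Q) (Q * X1)" using PQ by simp
    also have "P * X1 + [:a:] * Q = X1 * (P + smult a Q1)" by (simp add: Q1 algebra_simps)
    also have "\<dots> = X1 * X1 * R0" by (simp only: R0 mult.assoc)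
    also have "Fract (X1 * X1 * R0) (Q * X1) = Fract R0 Q1"
    proof -
      have "Q * X1 = (X1 * X1) * Q1" by (simp only: Q1 mult_ac)
      moreover have "X1 * X1 \<noteq> 0" using X1_nz by simp
      ultimately show ?thesis using mult_fract_cancel by metis
    qed
    finally show ?thesis using regular_intro[OF \<open>Q1 \<noteq> 0\<close> q1] by simp
  qed
qed

lemma pole2:
  assumes "w \<in> Ric a b lam" shows "regular_at w (-1) \<or> regular_at (w + Fract [:b:] X2) (-1)"
proof -
  obtain P Q where PQ: "Q \<noteq> 0" "coprime P Q" "w = Fract P Q" using coprime_rep by blast
  have R: "Ricq a b lam P Q" using assms PQ Ric_iff by blast
  show ?thesis
  proof (cases "poly Q (-1) = 0")
    case False then show ?thesis using PQ regular_intro by blast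
  next
    case True
    then obtain Q1 where Q1: "Q = X2 * Q1" using poly_eq_0_iff_dvd[of Q "-1"] by (auto elim: dvdE)
    have q1: "poly Q1 (-1) \<noteq> 0"
    proof
      assume "poly Q1 (-1) = 0" then obtain Q2 where "Q1 = X2*Q2" using poly_eq_0_iff_dvd[of Q1 "-1"] by (auto elim: dvdE)
      then have "Q = X2^2 * Q2" using Q1 by (simp only: power2_eq_square mult.assoc)
      then have "X2^2 dvd Q" by (rule dvdI)
      then show False using no_double_pole2 R PQ by blast
    qed
    have "poly P (-1) \<noteq> 0" using coprime_root PQ(2) True by blast
    then have e: "poly P (-1) + b * poly Q1 (-1) = 0" using residue2[of a b lam P Q1] R Q1 by simp
    then obtain R0 where R0: "P + smult b Q1 = X2 * R0" using poly_eq_0_iff_dvd[of "P + smult b Q1" "-1"] by (auto elim: dvdE)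
    have "Q1 \<noteq> 0" using PQ Q1 by auto
    have "w + Fract [:b:] X2 = Fract (P * X2 + [:b:] * Q) (Q * X2)" using PQ by simp
    also have "P * X2 + [:b:] * Q = X2 * (P + smult b Q1)" by (simp add: Q1 algebra_simps)
    also have "\<dots> = X2 * X2 * R0" by (simp only: R0 mult.assoc)
    also have "Fract (X2 * X2 * R0) (Q * X2) = Fract R0 Q1"
    proof -
      have "Q * X2 = (X2 * X2) * Q1" by (simp only: Q1 mult_ac)
      moreover have "X2 * X2 \<noteq> 0" using X2_nz by simp
      ultimately show ?thesis using mult_fract_cancel by metis
    qed
    finally show ?thesis using regular_intro[OF \<open>Q1 \<noteq> 0\<close> q1] by simp
  qed
qed

definition Top :: "real \<Rightarrow> real \<Rightarrow> real poly \<Rightarrow> real poly" where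
  "Top A B y = T_p * pderiv (pderiv y) + T_q A B * pderiv y"

lemma Ediff_eig: "Ediff A B mu (pderiv y) y = y * (Top A B y - smult mu y)"
  by (rule pext) (simp add: Ediff_def Top_def T_r_def; algebra)

lemma Ricq_eig: assumes "y \<noteq> 0" shows "Ricq A B mu (pderiv y) y \<longleftrightarrow> Top A B y = smult mu y"
proof -
  have "Ricq A B mu (pderiv y) y \<longleftrightarrow> y * (Top A B y - smult mu y) = 0"
    unfolding Ricq_Ediff Ediff_eig by (rule refl)
  also have "\<dots> \<longleftrightarrow> Top A B y - smult mu y = 0" using assms by simp
  finally show ?thesis by simp
qed

lemma degree_mult_pderiv: "degree (p * pderiv q) \<le> degree p + degree (q::real poly) - 1"
proof (cases "pderiv q = 0")
  case True then show ?thesis by simp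
next
  case False
  have "degree (p * pderiv q) \<le> degree p + degree (pderiv q)" by (rule degree_mult_le)
  moreover have "degree (pderiv q) = degree q - 1" by (rule degree_pderiv)
  moreover have "degree q \<noteq> 0" using False pderiv_eq_0_iff[of q] by simp
  ultimately show ?thesis by simp
qed

lemma degree_Tp: "degree T_p = 2" by (simp add: T_p_def)
lemma degree_Tq: "degree (T_q A B) \<le> 1" by (simp add: T_q_def)
lemma Tp_nz: "T_p \<noteq> 0" by (simp add: T_p_def)

lemma coprime_X1: "poly Q 1 \<noteq> 0 \<Longrightarrow> coprime Q X1"
proof -
  assume "poly Q 1 \<noteq> 0"
  then have "\<not> X1 dvd Q" using poly_eq_0_iff_dvd[of Q 1] by simp
  moreover have "prime_elem X1" by (rule prime_elem_linear_field_poly) simp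
  ultimately have "coprime X1 Q" by (rule prime_elem_imp_coprime[rotated])
  then show ?thesis by (simp add: coprime_commute)
qed

lemma coprime_X2: "poly Q (-1) \<noteq> 0 \<Longrightarrow> coprime Q X2"
proof -
  assume "poly Q (-1) \<noteq> 0"
  then have "\<not> X2 dvd Q" using poly_eq_0_iff_dvd[of Q "-1"] by simp
  moreover have "prime_elem X2" by (rule prime_elem_linear_field_poly) simp
  ultimately have "coprime X2 Q" by (rule prime_elem_imp_coprime[rotated])
  then show ?thesis by (simp add: coprime_commute)
qed

lemma regular_sol:
  assumes "w \<in> Ric A B mu" "regular_at w 1" "regular_at w (-1)"
  shows "\<exists>y. y \<noteq> 0 \<and> w = Fract (pderiv y) y \<and> Top A B y = smult mu y"
proof -
  obtain P Q where PQ: "Q \<noteq> 0" "coprime P Q" "w = Fract P Q" using coprime_rep by blast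
  have R: "Ricq A B mu P Q" using assms PQ Ric_iff by blast
  have q1: "poly Q 1 \<noteq> 0" and qm1: "poly Q (-1) \<noteq> 0"
    using regular_coprime assms PQ by blast+
  have "Q dvd X1 * (X2 * (P * (P - pderiv Q)))"
    using Ricq_P1[OF R] unfolding Tp_eq by (metis dvd_triv_left mult.assoc)
  then have "Q dvd X2 * (P * (P - pderiv Q))"
    using coprime_dvd_mult_right_iff[OF coprime_X1[OF q1]] by blast
  then have "Q dvd P * (P - pderiv Q)"
    using coprime_dvd_mult_right_iff[OF coprime_X2[OF qm1]] by blast
  moreover have "coprime Q P" using PQ(2) by (simp add: coprime_commute)
  ultimately have "Q dvd P - pderiv Q"
    using coprime_dvd_mult_right_iff by metis
  then obtain R where PR: "P - pderiv Q = Q * R" by (elim dvdE)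
  then have PR': "P = pderiv Q + Q * R" by (simp add: algebra_simps)
  define H where "H = T_p * R^2 + (T_p * pderiv R + T_q A B * R - [:mu:])"
  define K where "K = T_p * pderiv (pderiv Q) + T_q A B * pderiv Q + smult 2 ((T_p * R) * pderiv Q)"
  have "Ediff A B mu P Q = Q * (K + H * Q)"
    unfolding PR' by (rule pext) (simp add: Ediff_def K_def H_def pderiv_mult pderiv_add T_r_def; algebra)
  then have G0: "K + H * Q = 0" using R PQ(1) by (simp add: Ricq_Ediff)
  have R0: "R = 0"
  proof (rule ccontr)
    assume Rnz: "R \<noteq> 0"
    define r where "r = degree R"
    define dq where "dq = degree Q"
    have d1: "degree (T_p * R^2) = 2 * r + 2"
      using Rnz Tp_nz by (simp add: degree_mult_eq degree_power_eq degree_Tp r_def)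
    have d2: "degree (T_p * pderiv R + T_q A B * R - [:mu:]) \<le> r + 1"
    proof -
      have "degree (T_p * pderiv R) \<le> r + 1" using degree_mult_pderiv[of T_p R] by (simp add: degree_Tp r_def)
      moreover have "degree (T_q A B * R) \<le> r + 1"
        using degree_mult_le[of "T_q A B" R] degree_Tq[of A B] by (simp add: r_def)
      ultimately show ?thesis
        by (intro degree_diff_le degree_add_le) auto
    qed
    have dH: "degree H = 2 * r + 2" unfolding H_def
      using d1 d2 by (subst degree_add_eq_left) auto
    have Hnz: "H \<noteq> 0" using dH by auto
    have dHQ: "degree (H * Q) = 2 * r + 2 + dq" using Hnz PQ(1) dH by (simp add: degree_mult_eq dq_def)
    have dK: "degree K \<le> r + 1 + dq"
    proof -
      have "degree (pderiv Q) \<le> dq" by (simp add: degree_pderiv dq_def)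
      have k1: "degree (T_p * pderiv (pderiv Q)) \<le> r + 1 + dq"
        using degree_mult_pderiv[of T_p "pderiv Q"] degree_pderiv[of Q] by (simp add: degree_Tp dq_def)
      have k2: "degree (T_q A B * pderiv Q) \<le> r + 1 + dq"
        using degree_mult_pderiv[of "T_q A B" Q] degree_Tq[of A B] by (simp add: dq_def)
      have k3: "degree (smult 2 ((T_p * R) * pderiv Q)) \<le> r + 1 + dq"
        using degree_mult_pderiv[of "T_p * R" Q] degree_mult_le[of T_p R]
        by (simp add: degree_Tp dq_def r_def)
      show ?thesis unfolding K_def using k1 k2 k3
        by (intro degree_add_le) auto
    qed
    have "degree (K + H * Q) = 2 * r + 2 + dq"
      using dK dHQ by (subst degree_add_eq_right) auto
    then show False using G0 by simp
  qed
  then have "P = pderiv Q" using PR' by simp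
  then have "Top A B Q = smult mu Q" using R PQ(1) Ricq_eig by simp
  then show ?thesis using PQ \<open>P = pderiv Q\<close> by blast
qed

definition lam1 :: "real \<Rightarrow> real \<Rightarrow> nat \<Rightarrow> real" where
  "lam1 A B j = real j * (real j + A + B + 1)"

definition Kc :: "real \<Rightarrow> real \<Rightarrow> real \<Rightarrow> nat \<Rightarrow> real" where
  "Kc c A B j = (real j + 1) * (2 * c * real j + (A + B + 2) * c + A - B)"

lemma pderiv_shift: "pderiv (pcompose y [:c,1:]) = pcompose (pderiv y) [:c,1:]"
  by (simp add: pderiv_pcompose pderiv_pCons)

lemma shift_Top:
  assumes "c * c = 1"
  shows "pcompose (Top A B y) [:c,1:] =
     [:0, 2*c, 1:] * pderiv (pderiv (pcompose y [:c,1:])) + [:(A-B) + (A+B+2)*c, A+B+2:] * pderiv (pcompose y [:c,1:])"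
proof -
  have 1: "pcompose T_p [:c,1:] = [:0, 2*c, 1:]" using assms
    by (simp add: T_p_def pcompose_pCons algebra_simps)
  have 2: "pcompose (T_q A B) [:c,1:] = [:(A-B) + (A+B+2)*c, A+B+2:]"
    by (simp add: T_q_def pcompose_pCons algebra_simps)
  show ?thesis unfolding Top_def pcompose_add pcompose_mult 1 2 pderiv_shift by (rule refl)
qed

lemma shift_coeff:
  assumes "c * c = 1"
  shows "coeff (pcompose (Top A B y) [:c,1:]) j =
    lam1 A B j * coeff (pcompose y [:c,1:]) j + Kc c A B j * coeff (pcompose y [:c,1:]) (Suc j)"
proof -
  define z where "z = pcompose y [:c,1:]"
  have e: "pcompose (Top A B y) [:c,1:] =
     pCons 0 (smult (2*c) (pderiv (pderiv z)) + pCons 0 (pderiv (pderiv z)))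
     + (smult ((A-B) + (A+B+2)*c) (pderiv z) + pCons 0 (smult (A+B+2) (pderiv z)))"
    unfolding shift_Top[OF assms] z_def by simp
  show ?thesis
    unfolding e z_def[symmetric]
  proof (cases j)
    case 0 then show "coeff (pCons 0 (smult (2*c) (pderiv (pderiv z)) + pCons 0 (pderiv (pderiv z)))
     + (smult ((A-B) + (A+B+2)*c) (pderiv z) + pCons 0 (smult (A+B+2) (pderiv z)))) j =
    lam1 A B j * coeff z j + Kc c A B j * coeff z (Suc j)"
      by (simp add: coeff_pderiv lam1_def Kc_def algebra_simps)
  next
    case (Suc k)
    then show "coeff (pCons 0 (smult (2*c) (pderiv (pderiv z)) + pCons 0 (pderiv (pderiv z)))
     + (smult ((A-B) + (A+B+2)*c) (pderiv z) + pCons 0 (smult (A+B+2) (pderiv z)))) j =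
    lam1 A B j * coeff z j + Kc c A B j * coeff z (Suc j)"
      by (cases k) (simp_all add: coeff_pderiv lam1_def Kc_def algebra_simps)
  qed
qed

lemma eig_rec:
  assumes "c * c = 1" "Top A B y = smult mu y"
  shows "lam1 A B j * coeff (pcompose y [:c,1:]) j + Kc c A B j * coeff (pcompose y [:c,1:]) (Suc j)
     = mu * coeff (pcompose y [:c,1:]) j"
  using shift_coeff[OF assms(1), of A B y j] assms(2) by (simp add: pcompose_smult)

lemma up_zero:
  assumes "c * c = 1" "Top A B y = smult mu y" "\<And>j. Kc c A B j \<noteq> 0"
    "coeff (pcompose y [:c,1:]) j0 = 0" "j0 \<le> l"
  shows "coeff (pcompose y [:c,1:]) l = 0"
  using assms(5)
proof (induction l rule: dec_induct)
  case base then show ?case using assms(4) .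
next
  case (step l)
  have "Kc c A B l * coeff (pcompose y [:c,1:]) (Suc l) = 0"
    using eig_rec[OF assms(1,2), of l] step.IH by simp
  then show ?case using assms(3)[of l] by simp
qed

lemma Kc1_nz: "A \<notin> \<int> \<Longrightarrow> Kc 1 A B j \<noteq> 0"
proof
  assume A: "A \<notin> \<int>" and "Kc 1 A B j = 0"
  then have "2 * real j + (A + B + 2) + A - B = 0" by (simp add: Kc_def)
  then have "A = - real j - 1" by simp
  then have "A \<in> \<int>" by simp
  then show False using A by simp
qed

lemma Kcm1_nz: "B \<notin> \<int> \<Longrightarrow> Kc (-1) A B j \<noteq> 0"
proof
  assume B: "B \<notin> \<int>" and "Kc (-1) A B j = 0"
  then have "2 * (-1) * real j + (A + B + 2) * (-1) + A - B = 0" by (simp add: Kc_def)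
  then have "B = - real j - 1" by simp
  then have "B \<in> \<int>" by simp
  then show False using B by simp
qed

lemma shift_zero:
  assumes "c * c = 1" "Top A B y = smult mu y" "\<And>j. Kc c A B j \<noteq> 0"
    "coeff (pcompose y [:c,1:]) j0 = 0" "y \<noteq> 0"
  shows "j0 > degree y"
proof (rule ccontr)
  assume "\<not> j0 > degree y"
  have "degree (pcompose y [:c,1:]) = degree y" by (simp add: degree_pcompose)
  moreover have "pcompose y [:c,1:] \<noteq> 0" using assms(5) pcompose_eq_0[of y "[:c,1:]"] by auto
  ultimately have "coeff (pcompose y [:c,1:]) (degree y) \<noteq> 0" by (metis leading_coeff_0_iff)
  moreover have "coeff (pcompose y [:c,1:]) (degree y) = 0"
    using up_zero[OF assms(1-4)] \<open>\<not> j0 > degree y\<close> by simp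
  ultimately show False by simp
qed

lemma eig_at1:
  assumes "A \<notin> \<int>" "Top A B y = smult mu y" "y \<noteq> 0"
  shows "poly y 1 \<noteq> 0"
proof
  assume "poly y 1 = 0"
  then have "coeff (pcompose y [:1,1:]) 0 = 0" by (simp add: poly_0_coeff_0[symmetric] poly_pcompose)
  then show False using shift_zero[of 1 A B y mu 0] assms Kc1_nz by auto
qed

lemma eig_atm1:
  assumes "B \<notin> \<int>" "Top A B y = smult mu y" "y \<noteq> 0"
  shows "poly y (-1) \<noteq> 0"
proof
  assume "poly y (-1) = 0"
  then have "coeff (pcompose y [:-1,1:]) 0 = 0" by (simp add: poly_0_coeff_0[symmetric] poly_pcompose)
  then show False using shift_zero[of "-1" A B y mu 0] assms Kcm1_nz by auto
qed

lemma eig_mu: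
  assumes "Top A B y = smult mu y" "y \<noteq> 0"
  shows "mu = lam1 A B (degree y)"
proof -
  define z where "z = pcompose y [:1,1:]"
  have dz: "degree z = degree y" by (simp add: z_def degree_pcompose)
  have "z \<noteq> 0" using assms(2) pcompose_eq_0[of y "[:1,1:]"] by (auto simp: z_def)
  then have "coeff z (degree y) \<noteq> 0" using dz by (metis leading_coeff_0_iff)
  moreover have "coeff z (Suc (degree y)) = 0" using dz by (simp add: coeff_eq_0)
  moreover have "lam1 A B (degree y) * coeff z (degree y) + Kc 1 A B (degree y) * coeff z (Suc (degree y))
     = mu * coeff z (degree y)" using eig_rec[of 1 A B y mu "degree y"] assms by (simp add: z_def)
  ultimately show ?thesis by simp
qed

lemma nex:
  assumes "A \<notin> \<int>" "Top A B y = smult mu y" "y \<noteq> 0" "k < degree y"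
    "lam1 A B k = lam1 A B (degree y)"
  shows False
proof -
  have mu: "mu = lam1 A B k" using eig_mu[OF assms(2,3)] assms(5) by simp
  have "lam1 A B k * coeff (pcompose y [:1,1:]) k + Kc 1 A B k * coeff (pcompose y [:1,1:]) (Suc k)
     = mu * coeff (pcompose y [:1,1:]) k" using eig_rec[of 1 A B y mu k] assms by simp
  then have "Kc 1 A B k * coeff (pcompose y [:1,1:]) (Suc k) = 0" using mu by simp
  then have "coeff (pcompose y [:1,1:]) (Suc k) = 0" using Kc1_nz[OF assms(1)] by simp
  then have "Suc k > degree y" using shift_zero[of 1 A B y mu "Suc k"] assms Kc1_nz by auto
  then show False using assms(4) by simp
qed

primrec gseq :: "real \<Rightarrow> real \<Rightarrow> nat \<Rightarrow> nat \<Rightarrow> real" where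
  "gseq A B n 0 = 1"
| "gseq A B n (Suc i) = - Kc 1 A B (n - Suc i) * gseq A B n i / (lam1 A B (n - Suc i) - lam1 A B n)"

lemma pcompose_X1X2: "pcompose (pcompose z X1) X2 = z"
  by (simp add: pcompose_assoc[symmetric] pcompose_pCons)

lemma pcompose_X2X1: "pcompose (pcompose z X2) X1 = z"
  by (simp add: pcompose_assoc[symmetric] pcompose_pCons)

lemma eig_ex:
  assumes "\<And>k. k < n \<Longrightarrow> lam1 A B k \<noteq> lam1 A B n"
  shows "\<exists>y. y \<noteq> 0 \<and> degree y = n \<and> Top A B y = smult (lam1 A B n) y"
proof -
  define mu where "mu = lam1 A B n"
  define z where "z = (\<Sum>j\<le>n. monom (gseq A B n (n - j)) j)"
  have cz: "coeff z j = (if j \<le> n then gseq A B n (n - j) else 0)" for j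
    unfolding z_def by (simp add: coeff_sum coeff_monom)
  have czn: "coeff z n = 1" using cz by simp
  have dz: "degree z = n"
  proof (rule antisym)
    show "degree z \<le> n" by (rule degree_le) (simp add: cz)
    show "n \<le> degree z" by (rule le_degree) (simp add: czn)
  qed
  have rec: "lam1 A B j * coeff z j + Kc 1 A B j * coeff z (Suc j) = mu * coeff z j" for j
  proof (cases "j < n")
    case True
    define i where "i = n - Suc j"
    have ni: "n - j = Suc i" using True by (simp add: i_def)
    have "n - Suc i = j" using True by (simp add: i_def)
    then have g: "gseq A B n (Suc i) = - Kc 1 A B j * gseq A B n i / (lam1 A B j - mu)"
      by (simp add: mu_def)
    have ne: "lam1 A B j - mu \<noteq> 0" using assms[OF True] by (simp add: mu_def)
    have "coeff z j = gseq A B n (Suc i)" using True ni cz by (simp del: gseq.simps)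
    then have c1: "coeff z j = - Kc 1 A B j * gseq A B n i / (lam1 A B j - mu)" using g by simp
    have c2: "coeff z (Suc j) = gseq A B n i" using True cz by (simp add: i_def del: gseq.simps)
    show ?thesis unfolding c1 c2 using ne by (simp add: field_simps)
  next
    case False
    then show ?thesis
    proof (cases "j = n")
      case True then show ?thesis using cz by (simp add: mu_def)
    next
      case False then show ?thesis using \<open>\<not> j < n\<close> cz by simp
    qed
  qed
  define y where "y = pcompose z X1"
  have yz: "pcompose y X2 = z" by (simp add: y_def pcompose_X1X2)
  have "pcompose (Top A B y) X2 = pcompose (smult mu y) X2"
  proof (rule poly_eqI)
    fix j
    show "coeff (pcompose (Top A B y) X2) j = coeff (pcompose (smult mu y) X2) j"
      using shift_coeff[of 1 A B y j] rec[of j] by (simp add: yz pcompose_smult)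
  qed
  then have "Top A B y = smult mu y" by (metis pcompose_X2X1)
  moreover have "degree y = n" using dz by (simp add: y_def degree_pcompose)
  moreover have "y \<noteq> 0"
  proof
    assume "y = 0" then have "z = 0" using yz by simp
    then show False using czn by simp
  qed
  ultimately show ?thesis by (auto simp: mu_def)
qed

lemma Top_lin: "Top A B (p - smult k q) = Top A B p - smult k (Top A B q)"
  by (simp add: Top_def pderiv_diff pderiv_smult algebra_simps smult_add_right)

lemma eig_unique:
  assumes A: "A \<notin> \<int>" and e1: "Top A B y1 = smult mu y1" "y1 \<noteq> 0"
    and e2: "Top A B y2 = smult mu y2" "y2 \<noteq> 0"
  shows "degree y1 = degree y2 \<and> Fract (pderiv y1) y1 = Fract (pderiv y2) y2"
proof -
  have m1: "mu = lam1 A B (degree y1)" using eig_mu e1 by blast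
  have m2: "mu = lam1 A B (degree y2)" using eig_mu e2 by blast
  have dd: "degree y1 = degree y2"
  proof (rule ccontr)
    assume "degree y1 \<noteq> degree y2"
    then consider "degree y1 < degree y2" | "degree y2 < degree y1" by linarith
    then show False
    proof cases
      case 1 then show False using nex[OF A e2 1] m1 m2 by simp
    next
      case 2 then show False using nex[OF A e1 2] m1 m2 by simp
    qed
  qed
  define n where "n = degree y1"
  define k where "k = lead_coeff y1 / lead_coeff y2"
  have knz: "k \<noteq> 0" using e1(2) e2(2) by (simp add: k_def)
  define d where "d = y1 - smult k y2"
  have ed: "Top A B d = smult mu d" unfolding d_def Top_lin e1 e2 by (simp add: smult_diff_right mult.commute)
  have cdn: "coeff d n = 0" using e2(2) dd by (simp add: d_def k_def n_def)
  have "d = 0"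
  proof (rule ccontr)
    assume dnz: "d \<noteq> 0"
    have "degree d \<le> n" unfolding d_def n_def using dd
      by (metis degree_diff_le degree_smult_le le_trans order_refl)
    moreover have "degree d \<noteq> n" using cdn dnz by (metis leading_coeff_0_iff)
    ultimately have lt: "degree d < n" by simp
    have "mu = lam1 A B (degree d)" using eig_mu ed dnz by blast
    then show False using nex[OF A e1 lt[unfolded n_def]] m1 by simp
  qed
  then have y1: "y1 = smult k y2" by (simp add: d_def)
  have "Fract (pderiv y1) y1 = Fract ([:k:] * pderiv y2) ([:k:] * y2)" by (simp add: y1 pderiv_smult)
  also have "\<dots> = Fract (pderiv y2) y2" using knz by (simp add: mult_fract_cancel del: mult_pCons_left)
  finally show ?thesis using dd by simp
qed

definition vf :: "real \<Rightarrow> real \<Rightarrow> real poly fract" where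
  "vf \<alpha> \<beta> = Fract [:\<alpha>:] X1 + Fract [:\<beta>:] X2"

lemma vf_eq: "vf \<alpha> \<beta> = Fract [:\<alpha>-\<beta>, \<alpha>+\<beta>:] T_p"
  unfolding vf_def by (simp add: Tp_eq)

lemma shift_Ric_fwd:
  assumes "\<alpha>*(\<alpha>+a) = 0" "\<beta>*(\<beta>+b) = 0" "w \<in> Ric a b lam"
  shows "w - vf \<alpha> \<beta> \<in> Ric (a+2*\<alpha>) (b+2*\<beta>) (lam - (\<alpha>+\<beta>)*(\<alpha>+\<beta>+a+b+1))"
proof -
  obtain P Q where PQ: "w = Fract P Q" "Q \<noteq> 0" by (cases w) auto
  have R: "Ediff a b lam P Q = 0" using assms(3) PQ Ric_iff Ricq_Ediff by blast
  have "w - vf \<alpha> \<beta> = Fract (P*T_p - [:\<alpha>-\<beta>, \<alpha>+\<beta>:]*Q) (Q*T_p)"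
    using PQ Tp_nz by (simp add: vf_eq)
  moreover have "Q * T_p \<noteq> 0" using PQ Tp_nz by simp
  moreover have "Ediff (a+2*\<alpha>) (b+2*\<beta>) (lam - (\<alpha>+\<beta>)*(\<alpha>+\<beta>+a+b+1)) (P*T_p - [:\<alpha>-\<beta>,\<alpha>+\<beta>:]*Q) (Q*T_p) = 0"
    using Ediff_shift[OF assms(1,2), of lam P Q] R by simp
  ultimately show ?thesis using Ric_iff Ricq_Ediff by simp
qed

lemma shift_Ric_bwd:
  assumes "\<alpha>*(\<alpha>+a) = 0" "\<beta>*(\<beta>+b) = 0" "u \<in> Ric (a+2*\<alpha>) (b+2*\<beta>) mu"
  shows "u + vf \<alpha> \<beta> \<in> Ric a b (mu + (\<alpha>+\<beta>)*(\<alpha>+\<beta>+a+b+1))"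
proof -
  obtain P Q where PQ: "u = Fract P Q" "Q \<noteq> 0" by (cases u) auto
  have R: "Ediff (a+2*\<alpha>) (b+2*\<beta>) mu P Q = 0" using assms(3) PQ Ric_iff Ricq_Ediff by blast
  define V where "V = [:\<alpha>-\<beta>, \<alpha>+\<beta>:]"
  have e: "u + vf \<alpha> \<beta> = Fract (P*T_p + V*Q) (Q*T_p)"
    using PQ Tp_nz by (simp add: vf_eq V_def)
  have nz: "Q * T_p \<noteq> 0" using PQ Tp_nz by simp
  have "T_p^2 * Ediff a b (mu + (\<alpha>+\<beta>)*(\<alpha>+\<beta>+a+b+1)) (P*T_p + V*Q) (Q*T_p)
     = Ediff (a+2*\<alpha>) (b+2*\<beta>) mu ((P*T_p + V*Q)*T_p - V*(Q*T_p)) ((Q*T_p)*T_p)"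
    using Ediff_shift[OF assms(1,2), of "mu + (\<alpha>+\<beta>)*(\<alpha>+\<beta>+a+b+1)" "P*T_p + V*Q" "Q*T_p"]
    by (simp add: V_def)
  also have "(P*T_p + V*Q)*T_p - V*(Q*T_p) = P * (T_p*T_p)" by (simp add: algebra_simps)
  also have "(Q*T_p)*T_p = Q * (T_p*T_p)" by (simp add: algebra_simps)
  also have "Ediff (a+2*\<alpha>) (b+2*\<beta>) mu (P * (T_p*T_p)) (Q * (T_p*T_p)) = 0"
    using Ediff_scale R by simp
  finally have "Ediff a b (mu + (\<alpha>+\<beta>)*(\<alpha>+\<beta>+a+b+1)) (P*T_p + V*Q) (Q*T_p) = 0"
    using Tp_nz by simp
  then show ?thesis using e nz Ric_iff Ricq_Ediff by simp
qed

lemma regular_zero: "regular_at (Fract [:0:] Q) c"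
proof -
  have "Fract [:0:] Q = Fract 0 1" by (simp add: eq_fract(3))
  then show ?thesis using regular_intro[of 1 c 0] by simp
qed

lemma degree_xderiv:
  fixes y :: "real poly"
  shows "pCons 0 (pderiv y) - smult (real (degree y)) y = 0 \<or>
         degree (pCons 0 (pderiv y) - smult (real (degree y)) y) < degree y"
proof -
  define R where "R = pCons 0 (pderiv y) - smult (real (degree y)) y"
  have c: "coeff R j = (real j - real (degree y)) * coeff y j" for j
    by (cases j) (simp_all add: R_def coeff_pderiv algebra_simps)
  have z: "coeff R j = 0" if "j \<ge> degree y" for j
  proof (cases "j = degree y")
    case True then show ?thesis by (simp add: c)
  next
    case False then have "j > degree y" using that by simp
    then show ?thesis by (simp add: c coeff_eq_0)
  qed
  show ?thesis
  proof (cases "R = 0")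
    case False
    then have "coeff R (degree R) \<noteq> 0" by simp
    then have "degree R < degree y" using z by (meson not_le)
    then show ?thesis by (simp add: R_def)
  qed (simp add: R_def)
qed

lemma has_degree_wf:
  assumes "y \<noteq> 0"
  shows "has_degree (vf \<alpha> \<beta> + Fract (pderiv y) y) (real (degree y) + \<alpha> + \<beta>)"
proof -
  define n where "n = degree y"
  define d where "d = real n + \<alpha> + \<beta>"
  define N where "N = [:\<alpha>-\<beta>, \<alpha>+\<beta>:]*y + T_p * pderiv y"
  define D where "D = T_p * y"
  have wN: "vf \<alpha> \<beta> + Fract (pderiv y) y = Fract N D"
    using assms Tp_nz by (simp add: vf_eq N_def D_def mult_ac)
  have Dnz: "D \<noteq> 0" using assms Tp_nz by (simp add: D_def)
  define R where "R = pCons 0 (pderiv y) - smult (real n) y"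
  define M where "M = [:\<alpha>+\<beta>, \<alpha>-\<beta>:]*y + T_p * R"
  have Meq: "poly M x = x * poly N x - d * poly D x" for x
    by (simp add: M_def R_def N_def D_def d_def T_p_def; algebra)
  have dD: "degree D = n + 2" using assms Tp_nz by (simp add: D_def degree_mult_eq degree_Tp n_def)
  have dM: "degree M \<le> n + 1"
  proof -
    have 1: "degree ([:\<alpha>+\<beta>, \<alpha>-\<beta>:]*y) \<le> n + 1"
    proof -
      have "degree ([:\<alpha>+\<beta>, \<alpha>-\<beta>:]*y) \<le> degree [:\<alpha>+\<beta>, \<alpha>-\<beta>:] + degree y" by (rule degree_mult_le)
      moreover have "degree [:\<alpha>+\<beta>, \<alpha>-\<beta>:] \<le> 1" by simp
      ultimately show ?thesis unfolding n_def by linarith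
    qed
    have 2: "degree (T_p * R) \<le> n + 1"
    proof (cases "R = 0")
      case True then show ?thesis by simp
    next
      case False
      then have "degree R < n" using degree_xderiv[of y] by (simp add: R_def n_def)
      then show ?thesis using degree_mult_le[of T_p R] by (simp add: degree_Tp)
    qed
    show ?thesis unfolding M_def using 1 2 by (intro degree_add_le)
  qed
  have "((\<lambda>x. poly M x / poly D x) \<longlongrightarrow> 0) at_infinity"
    by (rule poly_divide_tendsto_0_at_infinity) (use dD dM in simp)
  then have "((\<lambda>x. poly M x / poly D x) \<longlongrightarrow> 0) at_top"
    by (rule tendsto_mono[OF at_top_le_at_infinity])
  then have lim: "((\<lambda>x. d + poly M x / poly D x) \<longlongrightarrow> d + 0) at_top"
    by (intro tendsto_intros)
  have ev: "eventually (\<lambda>x. poly D x \<noteq> 0) at_top"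
    using poly_eventually_not_zero[OF Dnz] filter_leD[OF at_top_le_at_infinity] by blast
  have "eventually (\<lambda>x. d + poly M x / poly D x = x * poly N x / poly D x) at_top"
    using ev by eventually_elim (simp add: Meq field_simps)
  then have "((\<lambda>x. x * poly N x / poly D x) \<longlongrightarrow> d) at_top"
    using lim by (simp add: tendsto_cong)
  then show ?thesis unfolding has_degree_def using wN Dnz by (auto simp: d_def n_def)
qed

lemma has_degree_unique:
  assumes "has_degree w d1" "has_degree w d2" shows "d1 = d2"
proof -
  obtain P1 Q1 where 1: "Q1 \<noteq> 0" "w = Fract P1 Q1" "((\<lambda>x. x * poly P1 x / poly Q1 x) \<longlongrightarrow> d1) at_top"
    using assms(1) unfolding has_degree_def by auto
  obtain P2 Q2 where 2: "Q2 \<noteq> 0" "w = Fract P2 Q2" "((\<lambda>x. x * poly P2 x / poly Q2 x) \<longlongrightarrow> d2) at_top"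
    using assms(2) unfolding has_degree_def by auto
  have e: "P1 * Q2 = P2 * Q1" using 1 2 by (simp add: eq_fract)
  have ev1: "eventually (\<lambda>x. poly Q1 x \<noteq> 0) at_top"
    using poly_eventually_not_zero[OF 1(1)] filter_leD[OF at_top_le_at_infinity] by blast
  have ev2: "eventually (\<lambda>x. poly Q2 x \<noteq> 0) at_top"
    using poly_eventually_not_zero[OF 2(1)] filter_leD[OF at_top_le_at_infinity] by blast
  have "eventually (\<lambda>x. x * poly P1 x / poly Q1 x = x * poly P2 x / poly Q2 x) at_top"
    using ev1 ev2
  proof eventually_elim
    case (elim x)
    have "poly P1 x * poly Q2 x = poly P2 x * poly Q1 x" using e by (metis poly_mult)
    then show ?case using elim by (simp add: field_simps)
  qed
  then have "((\<lambda>x. x * poly P2 x / poly Q2 x) \<longlongrightarrow> d1) at_top"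
    using 1(3) by (simp add: tendsto_cong)
  then show ?thesis using 2(3) tendsto_unique[OF trivial_limit_at_top_linorder] by blast
qed

definition al :: "nat \<Rightarrow> real \<Rightarrow> real" where "al i a = (if i = 2 \<or> i = 3 then -a else 0)"
definition be :: "nat \<Rightarrow> real \<Rightarrow> real" where "be i b = (if i = 2 \<or> i = 4 then -b else 0)"
definition AA :: "nat \<Rightarrow> real \<Rightarrow> real" where "AA i a = a + 2 * al i a"
definition BB :: "nat \<Rightarrow> real \<Rightarrow> real" where "BB i b = b + 2 * be i b"
definition wf :: "real \<Rightarrow> real \<Rightarrow> nat \<Rightarrow> real poly \<Rightarrow> real poly fract" where
  "wf a b i y = vf (al i a) (be i b) + Fract (pderiv y) y"
definition cst :: "nat \<Rightarrow> real \<Rightarrow> real \<Rightarrow> real" where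
  "cst i a b = (al i a + be i b) * (al i a + be i b + a + b + 1)"

lemma al_asym: "al (asym_type w) a = (if regular_at w 1 then 0 else -a)"
  by (simp add: asym_type_def al_def)
lemma be_asym: "be (asym_type w) b = (if regular_at w (-1) then 0 else -b)"
  by (simp add: asym_type_def be_def)
lemma al_sq: "al i a * (al i a + a) = 0" by (simp add: al_def)
lemma be_sq: "be i b * (be i b + b) = 0" by (simp add: be_def)

lemma AA_notin: "a \<notin> \<int> \<Longrightarrow> AA i a \<notin> \<int>"
  by (auto simp: AA_def al_def)
lemma BB_notin: "b \<notin> \<int> \<Longrightarrow> BB i b \<notin> \<int>"
  by (auto simp: BB_def be_def)
lemma nz_of_notin: "a \<notin> \<int> \<Longrightarrow> a \<noteq> 0" by auto

lemma neg_frac: "Fract [:-a:] X1 = - Fract [:a:] X1" "Fract [:-b:] X2 = - Fract [:b:] X2"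
  by simp_all

lemma ring_r1: "w - (-f + g) = (w + f) - (g::'a::ab_group_add)" by simp
lemma ring_r2: "w - (g + -f) = (w + f) - (g::'a::ab_group_add)" by simp

lemma classify:
  assumes ab: "a \<notin> \<int>" "b \<notin> \<int>" and w: "w \<in> Ric a b lam"
  shows "\<exists>y. y \<noteq> 0 \<and> Top (AA (asym_type w) a) (BB (asym_type w) b) y
      = smult (lam1 (AA (asym_type w) a) (BB (asym_type w) b) (degree y)) y
     \<and> w = wf a b (asym_type w) y
     \<and> lam = lam1 (AA (asym_type w) a) (BB (asym_type w) b) (degree y) + cst (asym_type w) a b"
proof -
  define i where "i = asym_type w"
  define \<alpha> where "\<alpha> = al i a"
  define \<beta> where "\<beta> = be i b"
  define u where "u = w - vf \<alpha> \<beta>"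
  have uR: "u \<in> Ric (AA i a) (BB i b) (lam - cst i a b)"
    unfolding u_def AA_def BB_def cst_def \<alpha>_def \<beta>_def
    by (rule shift_Ric_fwd[OF al_sq be_sq w])
  have r1: "regular_at u 1"
  proof (cases "regular_at w 1")
    case True
    then have "\<alpha> = 0" by (simp add: \<alpha>_def i_def al_asym)
    then have "u = w - (Fract [:0:] X1 + Fract [:\<beta>:] X2)" by (simp add: u_def vf_def)
    then show ?thesis using True by (simp only:) (intro regular_diff regular_add regular_zero regular_X2_1)
  next
    case False
    then have "\<alpha> = -a" by (simp add: \<alpha>_def i_def al_asym)
    then have "u = (w + Fract [:a:] X1) - Fract [:\<beta>:] X2"
      unfolding u_def vf_def \<open>\<alpha> = -a\<close> neg_frac by (simp only: ring_r1)
    moreover have "regular_at (w + Fract [:a:] X1) 1" using pole1[OF w] False by blast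
    ultimately show ?thesis by (simp only:) (intro regular_diff regular_X2_1)
  qed
  have r2: "regular_at u (-1)"
  proof (cases "regular_at w (-1)")
    case True
    then have "\<beta> = 0" by (simp add: \<beta>_def i_def be_asym)
    then have "u = w - (Fract [:\<alpha>:] X1 + Fract [:0:] X2)" by (simp add: u_def vf_def)
    then show ?thesis using True by (simp only:) (intro regular_diff regular_add regular_zero regular_X1_m1)
  next
    case False
    then have "\<beta> = -b" by (simp add: \<beta>_def i_def be_asym)
    then have "u = (w + Fract [:b:] X2) - Fract [:\<alpha>:] X1"
      unfolding u_def vf_def \<open>\<beta> = -b\<close> neg_frac by (simp only: ring_r2)
    moreover have "regular_at (w + Fract [:b:] X2) (-1)" using pole2[OF w] False by blast
    ultimately show ?thesis by (simp only:) (intro regular_diff regular_X1_m1)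
  qed
  obtain y where y: "y \<noteq> 0" "u = Fract (pderiv y) y" "Top (AA i a) (BB i b) y = smult (lam - cst i a b) y"
    using regular_sol[OF uR r1 r2] by blast
  have mu: "lam - cst i a b = lam1 (AA i a) (BB i b) (degree y)" using eig_mu[OF y(3) y(1)] .
  have "w = wf a b i y" using y(2) by (simp add: wf_def u_def \<alpha>_def \<beta>_def)
  then show ?thesis using y mu unfolding i_def[symmetric] by (intro exI[of _ y]) auto
qed

lemma ring3a: "(x + y + z) - y - z = (x::'a::ab_group_add)" by simp
lemma ring3b: "(x + y + z) - x - z = (y::'a::ab_group_add)" by simp

lemma construct:
  assumes ab: "a \<notin> \<int>" "b \<notin> \<int>" and i: "i \<in> {1,2,3,4}" and y: "y \<noteq> 0"
    "Top (AA i a) (BB i b) y = smult (lam1 (AA i a) (BB i b) (degree y)) y"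
  shows "wf a b i y \<in> Ric a b (lam1 (AA i a) (BB i b) (degree y) + cst i a b)"
    "asym_type (wf a b i y) = i"
    "has_degree (wf a b i y) (real (degree y) + al i a + be i b)"
proof -
  have "Fract (pderiv y) y \<in> Ric (AA i a) (BB i b) (lam1 (AA i a) (BB i b) (degree y))"
    using Ric_iff[of y] Ricq_eig[OF y(1)] y by simp
  then have "Fract (pderiv y) y + vf (al i a) (be i b) \<in> Ric a b (lam1 (AA i a) (BB i b) (degree y) + cst i a b)"
    unfolding AA_def BB_def cst_def by (rule shift_Ric_bwd[OF al_sq be_sq])
  then show "wf a b i y \<in> Ric a b (lam1 (AA i a) (BB i b) (degree y) + cst i a b)"
    by (simp add: wf_def add.commute)
  show "has_degree (wf a b i y) (real (degree y) + al i a + be i b)"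
    unfolding wf_def by (rule has_degree_wf[OF y(1)])
  have ry1: "regular_at (Fract (pderiv y) y) 1"
    using eig_at1[OF AA_notin[OF ab(1)] y(2,1)] y(1) by (simp add: regular_intro)
  have rym1: "regular_at (Fract (pderiv y) y) (-1)"
    using eig_atm1[OF BB_notin[OF ab(2)] y(2,1)] y(1) by (simp add: regular_intro)
  have R1: "regular_at (wf a b i y) 1 \<longleftrightarrow> al i a = 0"
  proof
    assume "regular_at (wf a b i y) 1"
    then have "regular_at (wf a b i y - Fract [:be i b:] X2 - Fract (pderiv y) y) 1"
      using ry1 by (intro regular_diff regular_X2_1)
    moreover have "wf a b i y - Fract [:be i b:] X2 - Fract (pderiv y) y = Fract [:al i a:] X1"
      unfolding wf_def vf_def by (rule ring3a)
    ultimately have "regular_at (Fract [:al i a:] X1) 1" by simp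
    then show "al i a = 0" using not_regular_X1 by blast
  next
    assume "al i a = 0"
    then show "regular_at (wf a b i y) 1" using ry1 unfolding wf_def vf_def
      by (simp only:) (intro regular_add regular_zero regular_X2_1)
  qed
  have R2: "regular_at (wf a b i y) (-1) \<longleftrightarrow> be i b = 0"
  proof
    assume "regular_at (wf a b i y) (-1)"
    then have "regular_at (wf a b i y - Fract [:al i a:] X1 - Fract (pderiv y) y) (-1)"
      using rym1 by (intro regular_diff regular_X1_m1)
    moreover have "wf a b i y - Fract [:al i a:] X1 - Fract (pderiv y) y = Fract [:be i b:] X2"
      unfolding wf_def vf_def by (rule ring3b)
    ultimately have "regular_at (Fract [:be i b:] X2) (-1)" by simp
    then show "be i b = 0" using not_regular_X2 by blast
  next
    assume "be i b = 0"
    then show "regular_at (wf a b i y) (-1)" using rym1 unfolding wf_def vf_def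
      by (simp only:) (intro regular_add regular_zero regular_X1_m1)
  qed
  have "a \<noteq> 0" "b \<noteq> 0" using ab by auto
  moreover have "i = 1 \<or> i = 2 \<or> i = 3 \<or> i = 4" using i by auto
  ultimately show "asym_type (wf a b i y) = i"
    unfolding asym_type_def R1 R2 by (auto simp: al_def be_def)
qed

definition hasEig :: "real \<Rightarrow> real \<Rightarrow> nat \<Rightarrow> nat \<Rightarrow> bool" where
  "hasEig a b i n \<longleftrightarrow> (\<exists>y. y \<noteq> 0 \<and> degree y = n \<and>
      Top (AA i a) (BB i b) y = smult (lam1 (AA i a) (BB i b) n) y)"

lemma lam1_diff: "lam1 A B k - lam1 A B n = (real k - real n) * (real k + real n + A + B + 1)"
  by (simp add: lam1_def algebra_simps)

lemma hasEig_iff: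
  assumes "a \<notin> \<int>"
  shows "hasEig a b i n \<longleftrightarrow> (\<forall>k<n. real k + real n + AA i a + BB i b + 1 \<noteq> 0)"
proof
  assume "hasEig a b i n"
  then obtain y where y: "y \<noteq> 0" "degree y = n" "Top (AA i a) (BB i b) y = smult (lam1 (AA i a) (BB i b) n) y"
    unfolding hasEig_def by blast
  show "\<forall>k<n. real k + real n + AA i a + BB i b + 1 \<noteq> 0"
  proof (intro allI impI notI)
    fix k assume k: "k < n" "real k + real n + AA i a + BB i b + 1 = 0"
    then have "lam1 (AA i a) (BB i b) k = lam1 (AA i a) (BB i b) n"
      using lam1_diff[of "AA i a" "BB i b" k n] by simp
    then show False using nex[OF AA_notin[OF assms] y(3) y(1)] k y(2) by simp
  qed
next
  assume h: "\<forall>k<n. real k + real n + AA i a + BB i b + 1 \<noteq> 0"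
  have "lam1 (AA i a) (BB i b) k \<noteq> lam1 (AA i a) (BB i b) n" if "k < n" for k
  proof -
    have "real k - real n \<noteq> 0" using that by simp
    moreover have "real k + real n + AA i a + BB i b + 1 \<noteq> 0" using h that by blast
    ultimately have "lam1 (AA i a) (BB i b) k - lam1 (AA i a) (BB i b) n \<noteq> 0"
      unfolding lam1_diff by simp
    then show ?thesis by simp
  qed
  then show "hasEig a b i n" unfolding hasEig_def using eig_ex by blast
qed

lemma lam_cst: assumes "i \<in> {1,2,3,4}"
  shows "lam1 (AA i a) (BB i b) n + cst i a b = lam_type i (real n) a b"
proof -
  have "i = 1 \<or> i = 2 \<or> i = 3 \<or> i = 4" using assms by auto
  then show ?thesis
    by (elim disjE) (simp_all add: lam1_def cst_def AA_def BB_def al_def be_def lam_type_def algebra_simps)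
qed

lemma dtype: "i \<in> {1,2,3,4} \<Longrightarrow> d_type i a b = al i a + be i b"
  by (auto simp: d_type_def al_def be_def)

lemma index_set_char:
  assumes ab: "a \<notin> \<int>" "b \<notin> \<int>" and i: "i \<in> {1,2,3,4}"
  shows "index_set i a b = {real n | n. hasEig a b i n}"
proof
  show "index_set i a b \<subseteq> {real n | n. hasEig a b i n}"
  proof
    fix k assume "k \<in> index_set i a b"
    then obtain lam w where w: "w \<in> Ric a b lam" "asym_type w = i" "has_degree w (k + d_type i a b)"
      unfolding index_set_def by blast
    obtain y where y: "y \<noteq> 0" "Top (AA i a) (BB i b) y = smult (lam1 (AA i a) (BB i b) (degree y)) y"
      "w = wf a b i y" using classify[OF ab w(1)] w(2) by blast
    have "has_degree w (real (degree y) + al i a + be i b)" using construct(3)[OF ab i y(1,2)] y(3) by simp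
    then have "k + d_type i a b = real (degree y) + al i a + be i b" using has_degree_unique w(3) by blast
    then have "k = real (degree y)" using dtype[OF i] by simp
    moreover have "hasEig a b i (degree y)" unfolding hasEig_def using y by blast
    ultimately show "k \<in> {real n | n. hasEig a b i n}" by blast
  qed
next
  show "{real n | n. hasEig a b i n} \<subseteq> index_set i a b"
  proof
    fix k assume "k \<in> {real n | n. hasEig a b i n}"
    then obtain n y where y: "k = real n" "y \<noteq> 0" "degree y = n"
       "Top (AA i a) (BB i b) y = smult (lam1 (AA i a) (BB i b) n) y" unfolding hasEig_def by blast
    note c = construct[OF ab i y(2), unfolded y(3), OF y(4)]
    show "k \<in> index_set i a b" unfolding index_set_def
      using c dtype[OF i] y(1) by (auto simp: add.assoc)
  qed
qed

lemma Ric_elem: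
  assumes ab: "a \<notin> \<int>" "b \<notin> \<int>" and w: "w \<in> Ric a b lam"
  shows "asym_type w \<in> {1,2,3,4} \<and> (\<exists>n. hasEig a b (asym_type w) n \<and> lam = lam_type (asym_type w) (real n) a b)"
proof -
  obtain y where y: "y \<noteq> 0" "Top (AA (asym_type w) a) (BB (asym_type w) b) y
      = smult (lam1 (AA (asym_type w) a) (BB (asym_type w) b) (degree y)) y"
     "lam = lam1 (AA (asym_type w) a) (BB (asym_type w) b) (degree y) + cst (asym_type w) a b"
    using classify[OF ab w] by blast
  have "hasEig a b (asym_type w) (degree y)" unfolding hasEig_def using y by blast
  moreover have "asym_type w \<in> {1,2,3,4}" by (simp add: asym_type_def)
  ultimately show ?thesis using y(3) lam_cst[of "asym_type w" a b] by metis
qed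

lemma exists_w:
  assumes ab: "a \<notin> \<int>" "b \<notin> \<int>" and i: "i \<in> {1,2,3,4}" and h: "hasEig a b i n"
  shows "\<exists>w. w \<in> Ric a b (lam_type i (real n) a b) \<and> asym_type w = i"
proof -
  obtain y where y: "y \<noteq> 0" "degree y = n"
       "Top (AA i a) (BB i b) y = smult (lam1 (AA i a) (BB i b) n) y" using h unfolding hasEig_def by blast
  note c = construct[OF ab i y(1), unfolded y(2), OF y(3)]
  then show ?thesis using lam_cst[OF i] by metis
qed

lemma same_type:
  assumes ab: "a \<notin> \<int>" "b \<notin> \<int>" and w: "w1 \<in> Ric a b lam" "w2 \<in> Ric a b lam"
    and t: "asym_type w1 = asym_type w2"
  shows "w1 = w2"
proof -
  define i where "i = asym_type w1"
  obtain y1 where y1: "y1 \<noteq> 0" "Top (AA i a) (BB i b) y1 = smult (lam1 (AA i a) (BB i b) (degree y1)) y1"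
     "w1 = wf a b i y1" "lam = lam1 (AA i a) (BB i b) (degree y1) + cst i a b"
    using classify[OF ab w(1)] unfolding i_def by blast
  obtain y2 where y2: "y2 \<noteq> 0" "Top (AA i a) (BB i b) y2 = smult (lam1 (AA i a) (BB i b) (degree y2)) y2"
     "w2 = wf a b i y2" "lam = lam1 (AA i a) (BB i b) (degree y2) + cst i a b"
    using classify[OF ab w(2)] t unfolding i_def by metis
  have "lam1 (AA i a) (BB i b) (degree y1) = lam1 (AA i a) (BB i b) (degree y2)" using y1(4) y2(4) by simp
  then have "Fract (pderiv y1) y1 = Fract (pderiv y2) y2"
    using eig_unique[OF AA_notin[OF ab(1)] y1(2) y1(1)] y2(1,2) by simp
  then show ?thesis using y1(3) y2(3) by (simp add: wf_def)
qed

lemma lt_expand: "lam_type i k a b = (k + d_type i a b) * ((k + d_type i a b) + (a + b + 1))"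
  by (simp add: lam_type_def d_type_def algebra_simps)

lemma sq_eq: "x*(x+c) = y*(y+c) \<Longrightarrow> x = y \<or> x + y + c = (0::real)"
proof -
  assume h: "x*(x+c) = y*(y+c)"
  have "(x - y) * (x + y + c) = 0" using h by algebra
  then show ?thesis by simp
qed

lemma lam_eq: "lam_type i k a b = lam_type j k' a b \<Longrightarrow>
   k + d_type i a b = k' + d_type j a b \<or> (k + d_type i a b) + (k' + d_type j a b) + (a + b + 1) = 0"
  unfolding lt_expand by (rule sq_eq)

lemma notZ: "x \<notin> \<int> \<Longrightarrow> x = of_int z \<Longrightarrow> False" by auto

context
  fixes a b :: real
  assumes A: "a \<notin> \<int>" "b \<notin> \<int>" "a + b \<notin> \<int>"
begin

lemma X12: "lam_type 1 (real n) a b \<noteq> lam_type 2 (real n') a b"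
proof
  assume "lam_type 1 (real n) a b = lam_type 2 (real n') a b"
  from lam_eq[OF this] have "real n = real n' - a - b \<or> real n + real n' + 1 = 0" by (simp add: d_type_def; arith)
  then show False
  proof
    assume "real n = real n' - a - b" then have "a + b = of_int (int n' - int n)" by simp
    then show False using A notZ by blast
  qed simp
qed

lemma X13: "lam_type 1 (real n) a b \<noteq> lam_type 3 (real n') a b"
proof
  assume "lam_type 1 (real n) a b = lam_type 3 (real n') a b"
  from lam_eq[OF this] have "real n = real n' - a \<or> real n + real n' + b + 1 = 0" by (simp add: d_type_def; arith)
  then show False
  proof
    assume "real n = real n' - a" then have "a = of_int (int n' - int n)" by simp
    then show False using A notZ by blast
  next
    assume "real n + real n' + b + 1 = 0" then have "b = of_int (- int n - int n' - 1)" by simp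
    then show False using A notZ by blast
  qed
qed

lemma X14: "lam_type 1 (real n) a b \<noteq> lam_type 4 (real n') a b"
proof
  assume "lam_type 1 (real n) a b = lam_type 4 (real n') a b"
  from lam_eq[OF this] have "real n = real n' - b \<or> real n + real n' + a + 1 = 0" by (simp add: d_type_def; arith)
  then show False
  proof
    assume "real n = real n' - b" then have "b = of_int (int n' - int n)" by simp
    then show False using A notZ by blast
  next
    assume "real n + real n' + a + 1 = 0" then have "a = of_int (- int n - int n' - 1)" by simp
    then show False using A notZ by blast
  qed
qed

lemma X23: "lam_type 2 (real n) a b \<noteq> lam_type 3 (real n') a b"
proof
  assume "lam_type 2 (real n) a b = lam_type 3 (real n') a b"
  from lam_eq[OF this] have "real n - a - b = real n' - a \<or> real n + real n' - a + 1 = 0" by (simp add: d_type_def; arith)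
  then show False
  proof
    assume "real n - a - b = real n' - a" then have "b = of_int (int n - int n')" by simp
    then show False using A notZ by blast
  next
    assume "real n + real n' - a + 1 = 0" then have "a = of_int (int n + int n' + 1)" by simp
    then show False using A notZ by blast
  qed
qed

lemma X24: "lam_type 2 (real n) a b \<noteq> lam_type 4 (real n') a b"
proof
  assume "lam_type 2 (real n) a b = lam_type 4 (real n') a b"
  from lam_eq[OF this] have "real n - a - b = real n' - b \<or> real n + real n' - b + 1 = 0" by (simp add: d_type_def; arith)
  then show False
  proof
    assume "real n - a - b = real n' - b" then have "a = of_int (int n - int n')" by simp
    then show False using A notZ by blast
  next
    assume "real n + real n' - b + 1 = 0" then have "b = of_int (int n + int n' + 1)" by simp
    then show False using A notZ by blast
  qed
qed

lemma X34: "lam_type 3 (real n) a b = lam_type 4 (real n') a b \<Longrightarrow> real n - a = real n' - b"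
proof -
  assume "lam_type 3 (real n) a b = lam_type 4 (real n') a b"
  from lam_eq[OF this] have "real n - a = real n' - b \<or> real n + real n' + 1 = 0" by (simp add: d_type_def)
  then show ?thesis by auto
qed

lemma X33: "lam_type 3 (real n) a b = lam_type 3 (real n') a b \<Longrightarrow> n = n' \<or> real n + real n' + 1 = a - b"
proof -
  assume "lam_type 3 (real n) a b = lam_type 3 (real n') a b"
  from lam_eq[OF this] have "real n - a = real n' - a \<or> real n - a + (real n' - a) + (a + b + 1) = 0"
    by (simp add: d_type_def)
  then show ?thesis by auto
qed

end


lemma comb: "(\<forall>k<n. int k + int n + 1 \<noteq> m) \<longleftrightarrow> (2 * int n < m \<or> m \<le> int n)"
proof
  assume h: "\<forall>k<n. int k + int n + 1 \<noteq> m"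
  show "2 * int n < m \<or> m \<le> int n"
  proof (rule ccontr)
    assume "\<not> (2 * int n < m \<or> m \<le> int n)"
    then have c: "m \<le> 2 * int n" "int n < m" by auto
    define k where "k = nat (m - int n - 1)"
    have "int k = m - int n - 1" using c by (simp add: k_def)
    then have "k < n" "int k + int n + 1 = m" using c by linarith+
    then show False using h by blast
  qed
next
  assume "2 * int n < m \<or> m \<le> int n"
  then show "\<forall>k<n. int k + int n + 1 \<noteq> m" by auto
qed

lemma f34': "lam_type 3 k a b = lam_type 4 (k - (a - b)) a b"
  by (simp add: lam_type_def algebra_simps)
lemma f34: "k' = k - (a - b) \<Longrightarrow> lam_type 3 k a b = lam_type 4 k' a b"
  using f34' by simp

lemma Setcompr_real: "{real n | n. P n} = real ` {n. P n}" by auto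

context
  fixes a b :: real and m :: int
  assumes A: "a \<notin> \<int>" "b \<notin> \<int>" "a + b \<notin> \<int>" and am: "a - b = of_int m"
begin

lemma a_eq: "a = b + of_int m" using am by simp

lemma E1: "hasEig a b 1 n"
proof -
  have "real k + real n + AA 1 a + BB 1 b + 1 \<noteq> 0" for k
  proof
    assume "real k + real n + AA 1 a + BB 1 b + 1 = 0"
    then have "a + b = of_int (- int k - int n - 1)" by (simp add: AA_def BB_def al_def be_def; linarith)
    then show False using A notZ by blast
  qed
  then show ?thesis using hasEig_iff[OF A(1)] by blast
qed

lemma E2: "hasEig a b 2 n"
proof -
  have "real k + real n + AA 2 a + BB 2 b + 1 \<noteq> 0" for k
  proof
    assume "real k + real n + AA 2 a + BB 2 b + 1 = 0"
    then have "a + b = of_int (int k + int n + 1)" by (simp add: AA_def BB_def al_def be_def; linarith)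
    then show False using A notZ by blast
  qed
  then show ?thesis using hasEig_iff[OF A(1)] by blast
qed

lemma E3: "hasEig a b 3 n \<longleftrightarrow> (2 * int n < m \<or> m \<le> int n)"
proof -
  have e: "real k + real n + AA 3 a + BB 3 b + 1 = of_int (int k + int n + 1 - m)" for k
    by (simp add: AA_def BB_def al_def be_def a_eq)
  have e2: "(real k + real n + AA 3 a + BB 3 b + 1 \<noteq> 0) \<longleftrightarrow> (int k + int n + 1 \<noteq> m)" for k
    unfolding e of_int_eq_0_iff by auto
  have "hasEig a b 3 n \<longleftrightarrow> (\<forall>k<n. int k + int n + 1 \<noteq> m)"
    unfolding hasEig_iff[OF A(1)] e2 by (rule refl)
  then show ?thesis using comb by simp
qed

lemma E4: "hasEig a b 4 n \<longleftrightarrow> (2 * int n < - m \<or> - m \<le> int n)"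
proof -
  have e: "real k + real n + AA 4 a + BB 4 b + 1 = of_int (int k + int n + 1 - (-m))" for k
    by (simp add: AA_def BB_def al_def be_def a_eq)
  have e2: "(real k + real n + AA 4 a + BB 4 b + 1 \<noteq> 0) \<longleftrightarrow> (int k + int n + 1 \<noteq> -m)" for k
    unfolding e of_int_eq_0_iff by auto
  have "hasEig a b 4 n \<longleftrightarrow> (\<forall>k<n. int k + int n + 1 \<noteq> -m)"
    unfolding hasEig_iff[OF A(1)] e2 by (rule refl)
  then show ?thesis using comb by simp
qed

lemma N0_img: "N0 = range real" by (auto simp: N0_def)

lemma I3m_img: "I3m a b = real ` {n. 2 * int n < m}"
proof -
  have "2 * real n - a + b = of_int (2 * int n - m)" for n by (simp add: a_eq)
  then show ?thesis by (auto simp: I3m_def N0_def)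
qed

lemma I3p_img: "I3p a b = real ` {n. m \<le> int n}"
proof -
  have "real n - a + b = of_int (int n - m)" for n by (simp add: a_eq)
  then show ?thesis by (auto simp: I3p_def N0_def)
qed

lemma I4m_img: "I4m a b = real ` {n. 2 * int n < - m}"
proof -
  have "2 * real n + a - b = of_int (2 * int n + m)" for n by (simp add: a_eq)
  then show ?thesis by (auto simp: I4m_def N0_def)
qed

lemma I4p_img: "I4p a b = real ` {n. - m \<le> int n}"
proof -
  have "real n + a - b = of_int (int n + m)" for n by (simp add: a_eq)
  then show ?thesis by (auto simp: I4p_def N0_def)
qed

lemma IS: "i \<in> {1,2,3,4} \<Longrightarrow> index_set i a b = real ` {n. hasEig a b i n}"
  using index_set_char[OF A(1,2)] Setcompr_real by simp

lemma sig_img: "sigma_of i (real ` S) a b = (\<lambda>n. lam_type i (real n) a b) ` S"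
  by (simp add: sigma_of_def image_image)

lemma ST: "i \<in> {1,2,3,4} \<Longrightarrow> sigma_type i a b = (\<lambda>n. lam_type i (real n) a b) ` {n. hasEig a b i n}"
  by (simp add: sigma_type_def IS sig_img)

end

theorem mainTheorem17:
  fixes a b :: real
  assumes "a \<notin> \<int>" and "b \<notin> \<int>" and "a + b \<notin> \<int>" and "a - b \<in> \<int>"
  shows
    "index_set 1 a b = N0 \<and> index_set 2 a b = N0
     \<and> index_set 3 a b = I3m a b \<union> I3p a b \<and> I3m a b \<inter> I3p a b = {}
     \<and> index_set 4 a b = I4m a b \<union> I4p a b \<and> I4m a b \<inter> I4p a b = {}
     \<and> (\<forall>lam \<in> sigma_type 1 a b. \<exists>w. Ric a b lam = {w} \<and> asym_type w = 1)
     \<and> (\<forall>lam \<in> sigma_type 2 a b. \<exists>w. Ric a b lam = {w} \<and> asym_type w = 2)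
     \<and> (\<forall>lam \<in> sigma_of 3 (I3m a b) a b. \<exists>w. Ric a b lam = {w} \<and> asym_type w = 3)
     \<and> (\<forall>lam \<in> sigma_of 4 (I4m a b) a b. \<exists>w. Ric a b lam = {w} \<and> asym_type w = 4)
     \<and> sigma_of 3 (I3p a b) a b = sigma_of 4 (I4p a b) a b
     \<and> (\<forall>lam \<in> sigma_of 3 (I3p a b) a b. \<exists>w3 w4. Ric a b lam = {w3, w4} \<and> w3 \<noteq> w4
            \<and> asym_type w3 = 3 \<and> asym_type w4 = 4)
     \<and> (a \<ge> b \<longrightarrow>
          sigma_qr a b = sigma_type 1 a b \<union> sigma_type 2 a b \<union> sigma_of 3 (I3m a b) a b
                          \<union> sigma_of 3 (I3p a b) a b
        \<and> sigma_type 1 a b \<inter> sigma_type 2 a b = {}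
        \<and> sigma_type 1 a b \<inter> sigma_of 3 (I3m a b) a b = {}
        \<and> sigma_type 1 a b \<inter> sigma_of 3 (I3p a b) a b = {}
        \<and> sigma_type 2 a b \<inter> sigma_of 3 (I3m a b) a b = {}
        \<and> sigma_type 2 a b \<inter> sigma_of 3 (I3p a b) a b = {}
        \<and> sigma_of 3 (I3m a b) a b \<inter> sigma_of 3 (I3p a b) a b = {})
     \<and> (b \<ge> a \<longrightarrow>
          sigma_qr a b = sigma_type 1 a b \<union> sigma_type 2 a b \<union> sigma_of 4 (I4m a b) a b
                          \<union> sigma_of 3 (I3p a b) a b
        \<and> sigma_type 1 a b \<inter> sigma_type 2 a b = {}
        \<and> sigma_type 1 a b \<inter> sigma_of 4 (I4m a b) a b = {}
        \<and> sigma_type 1 a b \<inter> sigma_of 3 (I3p a b) a b = {}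
        \<and> sigma_type 2 a b \<inter> sigma_of 4 (I4m a b) a b = {}
        \<and> sigma_type 2 a b \<inter> sigma_of 3 (I3p a b) a b = {}
        \<and> sigma_of 4 (I4m a b) a b \<inter> sigma_of 3 (I3p a b) a b = {})"
proof -
  have A: "a \<notin> \<int>" "b \<notin> \<int>" "a + b \<notin> \<int>" using assms by auto
  obtain m where am: "a - b = of_int m" using assms(4) by (auto elim: Ints_cases)
  define f where "f i = (\<lambda>n. lam_type i (real n) a b)" for i
  have e1: "hasEig a b 1 n" for n using E1[OF A am] .
  have e2: "hasEig a b 2 n" for n using E2[OF A am] .
  have e3: "hasEig a b 3 n \<longleftrightarrow> (2 * int n < m \<or> m \<le> int n)" for n using E3[OF A am] .
  have e4: "hasEig a b 4 n \<longleftrightarrow> (2 * int n < - m \<or> - m \<le> int n)" for n using E4[OF A am] .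
  have st1: "sigma_type 1 a b = f 1 ` UNIV"
  proof -
    have "{n. hasEig a b 1 n} = UNIV" using e1 by auto
    then show ?thesis using ST[OF A am, of 1] by (simp add: f_def)
  qed
  have st2: "sigma_type 2 a b = f 2 ` UNIV"
  proof -
    have "{n. hasEig a b 2 n} = UNIV" using e2 by auto
    then show ?thesis using ST[OF A am, of 2] by (simp add: f_def)
  qed
  have s3m: "sigma_of 3 (I3m a b) a b = f 3 ` {n. 2 * int n < m}"
    by (simp add: I3m_img[OF A am] sig_img[OF A am] f_def)
  have s3p: "sigma_of 3 (I3p a b) a b = f 3 ` {n. m \<le> int n}"
    by (simp add: I3p_img[OF A am] sig_img[OF A am] f_def)
  have s4m: "sigma_of 4 (I4m a b) a b = f 4 ` {n. 2 * int n < - m}"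
    by (simp add: I4m_img[OF A am] sig_img[OF A am] f_def)
  have s4p: "sigma_of 4 (I4p a b) a b = f 4 ` {n. - m \<le> int n}"
    by (simp add: I4p_img[OF A am] sig_img[OF A am] f_def)
  have is1: "index_set 1 a b = N0"
  proof -
    have "{n. hasEig a b 1 n} = UNIV" using e1 by auto
    then show ?thesis using IS[OF A am, of 1] N0_img[OF A am] by simp
  qed
  have is2: "index_set 2 a b = N0"
  proof -
    have "{n. hasEig a b 2 n} = UNIV" using e2 by auto
    then show ?thesis using IS[OF A am, of 2] N0_img[OF A am] by simp
  qed
  have is3: "index_set 3 a b = I3m a b \<union> I3p a b"
    using IS[OF A am, of 3] e3 by (auto simp: I3m_img[OF A am] I3p_img[OF A am])
  have is4: "index_set 4 a b = I4m a b \<union> I4p a b"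
    using IS[OF A am, of 4] e4 by (auto simp: I4m_img[OF A am] I4p_img[OF A am])
  have d3: "I3m a b \<inter> I3p a b = {}" by (auto simp: I3m_img[OF A am] I3p_img[OF A am])
  have d4: "I4m a b \<inter> I4p a b = {}" by (auto simp: I4m_img[OF A am] I4p_img[OF A am])
  have x12: "f 1 n \<noteq> f 2 n'" "f 2 n' \<noteq> f 1 n" for n n' using X12[OF A] by (metis f_def)+
  have x13: "f 1 n \<noteq> f 3 n'" "f 3 n' \<noteq> f 1 n" for n n' using X13[OF A] by (metis f_def)+
  have x14: "f 1 n \<noteq> f 4 n'" "f 4 n' \<noteq> f 1 n" for n n' using X14[OF A] by (metis f_def)+
  have x23: "f 2 n \<noteq> f 3 n'" "f 3 n' \<noteq> f 2 n" for n n' using X23[OF A] by (metis f_def)+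
  have x24: "f 2 n \<noteq> f 4 n'" "f 4 n' \<noteq> f 2 n" for n n' using X24[OF A] by (metis f_def)+
  have x34: "int n - int n' = m" if "f 3 n = f 4 n'" for n n'
  proof -
    have "real n - real n' = of_int m" using X34[OF A that[unfolded f_def]] am by simp
    then have "of_int (int n - int n') = (of_int m :: real)" by simp
    then show ?thesis by (simp only: of_int_eq_iff)
  qed
  have x33: "n = n' \<or> int n + int n' + 1 = m" if "f 3 n = f 3 n'" for n n'
  proof -
    have "n = n' \<or> real n + real n' + 1 = of_int m" using X33[OF A that[unfolded f_def]] am by simp
    moreover have "real n + real n' + 1 = of_int m \<longleftrightarrow> int n + int n' + 1 = m"
    proof -
      have "real n + real n' + 1 = of_int (int n + int n' + 1)" by simp
      then show ?thesis by (simp only: of_int_eq_iff)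
    qed
    ultimately show ?thesis by blast
  qed
  have f34n: "f 3 n = f 4 n'" if "int n' = int n - m" for n n'
  proof -
    have "real n' = real n - (a - b)"
    proof -
      have "real n' = of_int (int n')" by simp
      also have "\<dots> = of_int (int n - m)" using that by simp
      finally show ?thesis using am by simp
    qed
    then show ?thesis unfolding f_def by (rule f34)
  qed
  have cross: "f i n \<noteq> f j n'" if "i \<in> {1,2,3,4}" "j \<in> {1,2,3,4}" "i \<noteq> j" "\<not> (i = 3 \<and> j = 4)"
      "\<not> (i = 4 \<and> j = 3)" for i j n n'
    using that x12 x13 x14 x23 x24 by auto
  have simple: "\<exists>w. Ric a b (f i n) = {w} \<and> asym_type w = i"
    if i: "i \<in> {1,2,3,4}" and h: "hasEig a b i n"
      and c: "\<And>j n'. j \<in> {1,2,3,4} \<Longrightarrow> j \<noteq> i \<Longrightarrow> hasEig a b j n' \<Longrightarrow> f j n' \<noteq> f i n" for i n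
  proof -
    obtain w where w: "w \<in> Ric a b (f i n)" "asym_type w = i"
      using exists_w[OF A(1,2) i h] unfolding f_def by blast
    have "Ric a b (f i n) = {w}"
    proof (intro equalityI subsetI)
      fix w' assume w': "w' \<in> Ric a b (f i n)"
      from Ric_elem[OF A(1,2) w'] obtain n' where n': "asym_type w' \<in> {1,2,3,4}"
        "hasEig a b (asym_type w') n'" "f i n = f (asym_type w') n'" unfolding f_def by blast
      then have "asym_type w' = i" using c by metis
      then show "w' \<in> {w}" using same_type[OF A(1,2) w' w(1)] w(2) by simp
    qed (use w in simp)
    then show ?thesis using w by blast
  qed
  have P1: "\<forall>lam \<in> sigma_type 1 a b. \<exists>w. Ric a b lam = {w} \<and> asym_type w = 1"
    unfolding st1 using simple[of 1] e1 cross by auto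
  have P2: "\<forall>lam \<in> sigma_type 2 a b. \<exists>w. Ric a b lam = {w} \<and> asym_type w = 2"
    unfolding st2 using simple[of 2] e2 cross by auto
  have P3: "\<forall>lam \<in> sigma_of 3 (I3m a b) a b. \<exists>w. Ric a b lam = {w} \<and> asym_type w = 3"
    unfolding s3m
  proof safe
    fix n assume n: "2 * int n < m"
    show "\<exists>w. Ric a b (f 3 n) = {w} \<and> asym_type w = 3"
    proof (rule simple)
      show "hasEig a b 3 n" using e3 n by simp
      fix j n' assume j: "j \<in> {1,2,3,4}" "j \<noteq> 3" "hasEig a b j n'"
      show "f j n' \<noteq> f 3 n"
      proof (cases "j = 4")
        case True
        show ?thesis
        proof
          assume "f j n' = f 3 n"
          then have "int n - int n' = m" using x34 True by metis
          then show False using n by linarith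
        qed
      next
        case False then show ?thesis using cross j by auto
      qed
    qed simp
  qed
  have P4: "\<forall>lam \<in> sigma_of 4 (I4m a b) a b. \<exists>w. Ric a b lam = {w} \<and> asym_type w = 4"
    unfolding s4m
  proof safe
    fix n assume n: "2 * int n < - m"
    show "\<exists>w. Ric a b (f 4 n) = {w} \<and> asym_type w = 4"
    proof (rule simple)
      show "hasEig a b 4 n" using e4 n by simp
      fix j n' assume j: "j \<in> {1,2,3,4}" "j \<noteq> 4" "hasEig a b j n'"
      show "f j n' \<noteq> f 4 n"
      proof (cases "j = 3")
        case True
        show ?thesis
        proof
          assume "f j n' = f 4 n"
          then have "int n' - int n = m" using x34 True by metis
          then show False using n by linarith
        qed
      next
        case False then show ?thesis using cross j by auto
      qed
    qed simp
  qed
  have Peq: "sigma_of 3 (I3p a b) a b = sigma_of 4 (I4p a b) a b"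
    unfolding s3p s4p
  proof (intro equalityI subsetI)
    fix lam assume "lam \<in> f 3 ` {n. m \<le> int n}"
    then obtain n where n: "m \<le> int n" "lam = f 3 n" by blast
    define n' where "n' = nat (int n - m)"
    have "int n' = int n - m" using n by (simp add: n'_def)
    then have "f 3 n = f 4 n'" "- m \<le> int n'" by (auto intro: f34n)
    then show "lam \<in> f 4 ` {n. - m \<le> int n}" using n by blast
  next
    fix lam assume "lam \<in> f 4 ` {n. - m \<le> int n}"
    then obtain n' where n': "- m \<le> int n'" "lam = f 4 n'" by blast
    define n where "n = nat (int n' + m)"
    have "int n = int n' + m" using n' by (simp add: n_def)
    then have "f 3 n = f 4 n'" "m \<le> int n" by (auto intro: f34n)
    then show "lam \<in> f 3 ` {n. m \<le> int n}" using n' by (metis (mono_tags) image_eqI mem_Collect_eq)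
  qed
  have P34: "\<forall>lam \<in> sigma_of 3 (I3p a b) a b. \<exists>w3 w4. Ric a b lam = {w3, w4} \<and> w3 \<noteq> w4
            \<and> asym_type w3 = 3 \<and> asym_type w4 = 4"
    unfolding s3p
  proof safe
    fix n assume n: "m \<le> int n"
    define n' where "n' = nat (int n - m)"
    have nn': "int n' = int n - m" using n by (simp add: n'_def)
    have h3: "hasEig a b 3 n" using e3 n by simp
    have h4: "hasEig a b 4 n'" using e4 nn' by simp
    have eq: "f 3 n = f 4 n'" using f34n nn' by blast
    obtain w3 where w3: "w3 \<in> Ric a b (f 3 n)" "asym_type w3 = 3"
      using exists_w[OF A(1,2) _ h3] unfolding f_def by auto
    obtain w4 where w4: "w4 \<in> Ric a b (f 3 n)" "asym_type w4 = 4"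
      using exists_w[OF A(1,2) _ h4] eq unfolding f_def by auto
    have "Ric a b (f 3 n) = {w3, w4}"
    proof (intro equalityI subsetI)
      fix w' assume w': "w' \<in> Ric a b (f 3 n)"
      from Ric_elem[OF A(1,2) w'] obtain n'' where n'': "asym_type w' \<in> {1,2,3,4}"
        "hasEig a b (asym_type w') n''" "f 3 n = f (asym_type w') n''" unfolding f_def by blast
      have "asym_type w' = 3 \<or> asym_type w' = 4" using n'' cross[of 3 "asym_type w'" n n''] by auto
      then show "w' \<in> {w3, w4}"
        using same_type[OF A(1,2) w' w3(1)] same_type[OF A(1,2) w' w4(1)] w3(2) w4(2) by auto
    qed (use w3 w4 in auto)
    moreover have "w3 \<noteq> w4" using w3(2) w4(2) by auto
    ultimately show "\<exists>w3 w4. Ric a b (f 3 n) = {w3, w4} \<and> w3 \<noteq> w4 \<and> asym_type w3 = 3 \<and> asym_type w4 = 4"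
      using w3(2) w4(2) by blast
  qed
  have inqr: "f i n \<in> sigma_qr a b" if "i \<in> {1,2,3,4}" "hasEig a b i n" for i n
    using exists_w[OF A(1,2) that] unfolding sigma_qr_def f_def by auto
  have fromqr: "\<exists>i n. i \<in> {1,2,3,4} \<and> hasEig a b i n \<and> lam = f i n" if "lam \<in> sigma_qr a b" for lam
  proof -
    have "Ric a b lam \<noteq> {}" using that by (simp add: sigma_qr_def)
    then obtain w where "w \<in> Ric a b lam" by blast
    then show ?thesis using Ric_elem[OF A(1,2)] unfolding f_def by blast
  qed
  have d12: "f 1 ` UNIV \<inter> f 2 ` UNIV = {}" using x12 by blast
  have d13: "f 1 ` UNIV \<inter> f 3 ` S = {}" for S using x13 by blast
  have d14: "f 1 ` UNIV \<inter> f 4 ` S = {}" for S using x14 by blast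
  have d23: "f 2 ` UNIV \<inter> f 3 ` S = {}" for S using x23 by blast
  have d24: "f 2 ` UNIV \<inter> f 4 ` S = {}" for S using x24 by blast
  have d33: "f 3 ` {n. 2 * int n < m} \<inter> f 3 ` {n. m \<le> int n} = {}"
  proof (rule ccontr)
    assume "\<not> ?thesis"
    then obtain n n' where nn: "2 * int n < m" "m \<le> int n'" "f 3 n = f 3 n'" by blast
    from x33[OF nn(3)] show False using nn by auto
  qed
  have d43: "f 4 ` {n. 2 * int n < - m} \<inter> f 3 ` {n. m \<le> int n} = {}"
  proof (rule ccontr)
    assume "\<not> ?thesis"
    then obtain n n' where nn: "2 * int n < - m" "m \<le> int n'" "f 4 n = f 3 n'" by blast
    from x34[OF nn(3)[symmetric]] show False using nn by auto
  qed
  have Q1: "a \<ge> b \<longrightarrow>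
          sigma_qr a b = sigma_type 1 a b \<union> sigma_type 2 a b \<union> sigma_of 3 (I3m a b) a b
                          \<union> sigma_of 3 (I3p a b) a b
        \<and> sigma_type 1 a b \<inter> sigma_type 2 a b = {}
        \<and> sigma_type 1 a b \<inter> sigma_of 3 (I3m a b) a b = {}
        \<and> sigma_type 1 a b \<inter> sigma_of 3 (I3p a b) a b = {}
        \<and> sigma_type 2 a b \<inter> sigma_of 3 (I3m a b) a b = {}
        \<and> sigma_type 2 a b \<inter> sigma_of 3 (I3p a b) a b = {}
        \<and> sigma_of 3 (I3m a b) a b \<inter> sigma_of 3 (I3p a b) a b = {}"
  proof
    assume "a \<ge> b"
    then have m0: "m \<ge> 0" using am by (metis diff_ge_0_iff_ge of_int_0_le_iff)
    have qr: "sigma_qr a b = f 1 ` UNIV \<union> f 2 ` UNIV \<union> f 3 ` {n. 2 * int n < m} \<union> f 3 ` {n. m \<le> int n}"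
    proof (intro equalityI subsetI)
      fix lam assume "lam \<in> sigma_qr a b"
      then obtain i n where i: "i \<in> {1,2,3,4}" "hasEig a b i n" "lam = f i n" using fromqr by blast
      show "lam \<in> f 1 ` UNIV \<union> f 2 ` UNIV \<union> f 3 ` {n. 2 * int n < m} \<union> f 3 ` {n. m \<le> int n}"
      proof (cases "i = 4")
        case True
        then have "- m \<le> int n" using i e4 m0 by auto
        define n' where "n' = nat (int n + m)"
        have "int n = int n' - m" "m \<le> int n'" using \<open>- m \<le> int n\<close> by (auto simp: n'_def)
        then have "f 3 n' = f 4 n" by (intro f34n)
        moreover have "lam = f 4 n" using i True by simp
        ultimately have "lam = f 3 n'" by simp
        then have "lam \<in> f 3 ` {n. m \<le> int n}" using \<open>m \<le> int n'\<close> by blast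
        then show ?thesis by blast
      next
        case False
        then consider "i = 1" | "i = 2" | "i = 3" using i by auto
        then show ?thesis
        proof cases
          case 1 then have "lam = f 1 n" using i by simp
          then show ?thesis by blast
        next
          case 2 then have "lam = f 2 n" using i by simp
          then show ?thesis by blast
        next
          case 3
          then have d: "2 * int n < m \<or> m \<le> int n" using i e3 by simp
          have l: "lam = f 3 n" using i 3 by simp
          from d show ?thesis
          proof
            assume "2 * int n < m" then have "lam \<in> f 3 ` {n. 2 * int n < m}" using l by blast
            then show ?thesis by blast
          next
            assume "m \<le> int n" then have "lam \<in> f 3 ` {n. m \<le> int n}" using l by blast
            then show ?thesis by blast
          qed
        qed
      qed
    next
      fix lam assume "lam \<in> f 1 ` UNIV \<union> f 2 ` UNIV \<union> f 3 ` {n. 2 * int n < m} \<union> f 3 ` {n. m \<le> int n}"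
      then consider n where "lam = f 1 n" | n where "lam = f 2 n" | n where "lam = f 3 n" "2 * int n < m"
        | n where "lam = f 3 n" "m \<le> int n" by blast
      then show "lam \<in> sigma_qr a b"
      proof cases
        case (1 n) then show ?thesis using inqr[of 1 n] e1 by simp
      next
        case (2 n) then show ?thesis using inqr[of 2 n] e2 by simp
      next
        case (3 n) then show ?thesis using inqr[of 3 n] e3 by simp
      next
        case (4 n) then show ?thesis using inqr[of 3 n] e3 by simp
      qed
    qed
    show "sigma_qr a b = sigma_type 1 a b \<union> sigma_type 2 a b \<union> sigma_of 3 (I3m a b) a b
                          \<union> sigma_of 3 (I3p a b) a b
        \<and> sigma_type 1 a b \<inter> sigma_type 2 a b = {}
        \<and> sigma_type 1 a b \<inter> sigma_of 3 (I3m a b) a b = {}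
        \<and> sigma_type 1 a b \<inter> sigma_of 3 (I3p a b) a b = {}
        \<and> sigma_type 2 a b \<inter> sigma_of 3 (I3m a b) a b = {}
        \<and> sigma_type 2 a b \<inter> sigma_of 3 (I3p a b) a b = {}
        \<and> sigma_of 3 (I3m a b) a b \<inter> sigma_of 3 (I3p a b) a b = {}"
      unfolding st1 st2 s3m s3p by (intro conjI qr d12 d13 d23 d33)
  qed
  have Q2: "b \<ge> a \<longrightarrow>
          sigma_qr a b = sigma_type 1 a b \<union> sigma_type 2 a b \<union> sigma_of 4 (I4m a b) a b
                          \<union> sigma_of 3 (I3p a b) a b
        \<and> sigma_type 1 a b \<inter> sigma_type 2 a b = {}
        \<and> sigma_type 1 a b \<inter> sigma_of 4 (I4m a b) a b = {}
        \<and> sigma_type 1 a b \<inter> sigma_of 3 (I3p a b) a b = {}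
        \<and> sigma_type 2 a b \<inter> sigma_of 4 (I4m a b) a b = {}
        \<and> sigma_type 2 a b \<inter> sigma_of 3 (I3p a b) a b = {}
        \<and> sigma_of 4 (I4m a b) a b \<inter> sigma_of 3 (I3p a b) a b = {}"
  proof
    assume "b \<ge> a"
    then have m0: "m \<le> 0" using am by (metis diff_le_0_iff_le of_int_le_0_iff)
    have qr: "sigma_qr a b = f 1 ` UNIV \<union> f 2 ` UNIV \<union> f 4 ` {n. 2 * int n < - m} \<union> f 3 ` {n. m \<le> int n}"
    proof (intro equalityI subsetI)
      fix lam assume "lam \<in> sigma_qr a b"
      then obtain i n where i: "i \<in> {1,2,3,4}" "hasEig a b i n" "lam = f i n" using fromqr by blast
      show "lam \<in> f 1 ` UNIV \<union> f 2 ` UNIV \<union> f 4 ` {n. 2 * int n < - m} \<union> f 3 ` {n. m \<le> int n}"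
      proof (cases "i = 4 \<and> - m \<le> int n")
        case True
        define n' where "n' = nat (int n + m)"
        have "int n = int n' - m" "m \<le> int n'" using True by (auto simp: n'_def)
        then have "f 3 n' = f 4 n" by (intro f34n)
        moreover have "lam = f 4 n" using i True by simp
        ultimately have "lam = f 3 n'" by simp
        then have "lam \<in> f 3 ` {n. m \<le> int n}" using \<open>m \<le> int n'\<close> by blast
        then show ?thesis by blast
      next
        case False
        then consider "i = 1" | "i = 2" | "i = 3" | "i = 4" "2 * int n < - m" using i e4 by auto
        then show ?thesis
        proof cases
          case 1 then have "lam = f 1 n" using i by simp
          then show ?thesis by blast
        next
          case 2 then have "lam = f 2 n" using i by simp
          then show ?thesis by blast
        next
          case 3
          then have "m \<le> int n" using i e3 m0 by auto
          moreover have l: "lam = f 3 n" using i 3 by simp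
          ultimately have "lam \<in> f 3 ` {n. m \<le> int n}" by blast
          then show ?thesis by blast
        next
          case 4
          then have "lam \<in> f 4 ` {n. 2 * int n < - m}" using i by auto
          then show ?thesis by blast
        qed
      qed
    next
      fix lam assume "lam \<in> f 1 ` UNIV \<union> f 2 ` UNIV \<union> f 4 ` {n. 2 * int n < - m} \<union> f 3 ` {n. m \<le> int n}"
      then consider n where "lam = f 1 n" | n where "lam = f 2 n" | n where "lam = f 4 n" "2 * int n < - m"
        | n where "lam = f 3 n" "m \<le> int n" by blast
      then show "lam \<in> sigma_qr a b"
      proof cases
        case (1 n) then show ?thesis using inqr[of 1 n] e1 by simp
      next
        case (2 n) then show ?thesis using inqr[of 2 n] e2 by simp
      next
        case (3 n) then show ?thesis using inqr[of 4 n] e4 by simp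
      next
        case (4 n) then show ?thesis using inqr[of 3 n] e3 by simp
      qed
    qed
    show "sigma_qr a b = sigma_type 1 a b \<union> sigma_type 2 a b \<union> sigma_of 4 (I4m a b) a b
                          \<union> sigma_of 3 (I3p a b) a b
        \<and> sigma_type 1 a b \<inter> sigma_type 2 a b = {}
        \<and> sigma_type 1 a b \<inter> sigma_of 4 (I4m a b) a b = {}
        \<and> sigma_type 1 a b \<inter> sigma_of 3 (I3p a b) a b = {}
        \<and> sigma_type 2 a b \<inter> sigma_of 4 (I4m a b) a b = {}
        \<and> sigma_type 2 a b \<inter> sigma_of 3 (I3p a b) a b = {}
        \<and> sigma_of 4 (I4m a b) a b \<inter> sigma_of 3 (I3p a b) a b = {}"
      unfolding st1 st2 s4m s3p by (intro conjI qr d12 d14 d13 d24 d23 d43)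
  qed
  show ?thesis
    using is1 is2 is3 d3 is4 d4 P1 P2 P3 P4 Peq P34 Q1 Q2 by blast
qed

end
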